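(* Let $\mathbb{F}$ be an arbitrary field (any characteristic), $V$ an $n$-dimensional $\mathbb{F}$-vector space, and $b$ a non-degenerate symmetric or alternating bilinear form on $V$ with Witt index $\nu$. Let $\mathcal{F}$ be a maximal partially complete $b$-singular flag of $V$. Then: (a) $\mathrm{WS}_{b,\mathcal{F}}$ is a linear subspace of $\mathrm{End}(V)$ of dimension $\nu(n-\nu)$; (b) $\mathrm{WA}_{b,\mathcal{F}}$ is a linear subspace of $\mathrm{End}(V)$ of dimension $\nu(n-\nu-1)$.
   Context: The Witt index of $b$ is the maximal dimension of a totally singular subspace $X$ ($b(x,y)=0$ for all $x,y\in X$). An endomorphism $u$ is $b$-symmetric (resp. $b$-alternating) if $(x,y)\mapsto b(x,u(y))$ is symmetric (resp. alternating, i.e. vanishes on all $(x,x)$); $\mathcal{S}_b$, $\mathcal{A}_b$ denote the corresponding spaces. A flag $(F_0,\dots,F_p)$ is partially complete if $\dim F_i=i$ for all $i$, $b$-singular if $F_p$ is totally singular, maximal if $p=\nu$. $\mathrm{WS}_{b,\mathcal{F}}$ (resp. $\mathrm{WA}_{b,\mathcal{F}}$) is the set of nilpotent $u\in\mathcal{S}_b$ (resp. $u\in\mathcal{A}_b$) with $u(F_i)\subseteq F_i$ for all $i$. *)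

theory Defs
  imports Complex_Main "HOL-Library.Function_Algebras"
begin

definition fin_dim_vs :: "('a::field \<Rightarrow> 'v::ab_group_add \<Rightarrow> 'v) \<Rightarrow> bool" where
  "fin_dim_vs scale \<longleftrightarrow> vector_space scale \<and>
     (\<exists>B. finite B \<and> module.span scale B = UNIV)"

definition bilinear_form :: "('a::field \<Rightarrow> 'v::ab_group_add \<Rightarrow> 'v) \<Rightarrow> ('v \<Rightarrow> 'v \<Rightarrow> 'a) \<Rightarrow> bool" where
  "bilinear_form scale b \<longleftrightarrow>
     (\<forall>x. Vector_Spaces.linear scale (*) (b x)) \<and>
     (\<forall>y. Vector_Spaces.linear scale (*) (\<lambda>x. b x y))"

definition nondegenerate :: "('v::ab_group_add \<Rightarrow> 'v \<Rightarrow> 'a::field) \<Rightarrow> bool" where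
  "nondegenerate b \<longleftrightarrow> (\<forall>x. (\<forall>y. b x y = 0) \<longrightarrow> x = 0)"

definition symmetric_form :: "('v \<Rightarrow> 'v \<Rightarrow> 'a) \<Rightarrow> bool" where
  "symmetric_form b \<longleftrightarrow> (\<forall>x y. b x y = b y x)"

definition alternating_form :: "('v \<Rightarrow> 'v \<Rightarrow> 'a::zero) \<Rightarrow> bool" where
  "alternating_form b \<longleftrightarrow> (\<forall>x. b x x = 0)"

definition totally_singular :: "('a::field \<Rightarrow> 'v::ab_group_add \<Rightarrow> 'v) \<Rightarrow> ('v \<Rightarrow> 'v \<Rightarrow> 'a) \<Rightarrow> 'v set \<Rightarrow> bool" where
  "totally_singular scale b X \<longleftrightarrow> module.subspace scale X \<and> (\<forall>x\<in>X. \<forall>y\<in>X. b x y = 0)"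

definition witt_index :: "('a::field \<Rightarrow> 'v::ab_group_add \<Rightarrow> 'v) \<Rightarrow> ('v \<Rightarrow> 'v \<Rightarrow> 'a) \<Rightarrow> nat" where
  "witt_index scale b = Max {vector_space.dim scale X | X. totally_singular scale b X}"

definition is_flag :: "('a::field \<Rightarrow> 'v::ab_group_add \<Rightarrow> 'v) \<Rightarrow> (nat \<Rightarrow> 'v set) \<Rightarrow> nat \<Rightarrow> bool" where
  "is_flag scale F p \<longleftrightarrow> (\<forall>i\<le>p. module.subspace scale (F i)) \<and> (\<forall>i<p. F i \<subseteq> F (Suc i))"

definition partially_complete :: "('a::field \<Rightarrow> 'v::ab_group_add \<Rightarrow> 'v) \<Rightarrow> (nat \<Rightarrow> 'v set) \<Rightarrow> nat \<Rightarrow> bool" where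
  "partially_complete scale F p \<longleftrightarrow> (\<forall>i\<le>p. vector_space.dim scale (F i) = i)"

definition singular_flag :: "('a::field \<Rightarrow> 'v::ab_group_add \<Rightarrow> 'v) \<Rightarrow> ('v \<Rightarrow> 'v \<Rightarrow> 'a) \<Rightarrow> (nat \<Rightarrow> 'v set) \<Rightarrow> nat \<Rightarrow> bool" where
  "singular_flag scale b F p \<longleftrightarrow> totally_singular scale b (F p)"

text \<open>End(V), as a vector space of functions with pointwise operations.\<close>
definition end_scale :: "('a \<Rightarrow> 'v \<Rightarrow> 'v) \<Rightarrow> 'a \<Rightarrow> ('v \<Rightarrow> 'v) \<Rightarrow> ('v \<Rightarrow> 'v)" where
  "end_scale scale c u = (\<lambda>x. scale c (u x))"

definition End :: "('a::field \<Rightarrow> 'v::ab_group_add \<Rightarrow> 'v) \<Rightarrow> ('v \<Rightarrow> 'v) set" where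
  "End scale = {u. Vector_Spaces.linear scale scale u}"

definition b_symmetric_end :: "('a::field \<Rightarrow> 'v::ab_group_add \<Rightarrow> 'v) \<Rightarrow> ('v \<Rightarrow> 'v \<Rightarrow> 'a) \<Rightarrow> ('v \<Rightarrow> 'v) set" where
  "b_symmetric_end scale b = {u \<in> End scale. \<forall>x y. b x (u y) = b y (u x)}"

definition b_alternating_end :: "('a::field \<Rightarrow> 'v::ab_group_add \<Rightarrow> 'v) \<Rightarrow> ('v \<Rightarrow> 'v \<Rightarrow> 'a) \<Rightarrow> ('v \<Rightarrow> 'v) set" where
  "b_alternating_end scale b = {u \<in> End scale. \<forall>x. b x (u x) = 0}"

definition nilpotent_end :: "('v \<Rightarrow> 'v::zero) \<Rightarrow> bool" where
  "nilpotent_end u \<longleftrightarrow> (\<exists>k. (u ^^ k) = (\<lambda>_. 0))"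

definition stabilizes_flag :: "('v \<Rightarrow> 'v) \<Rightarrow> (nat \<Rightarrow> 'v set) \<Rightarrow> nat \<Rightarrow> bool" where
  "stabilizes_flag u F p \<longleftrightarrow> (\<forall>i\<le>p. u ` F i \<subseteq> F i)"

definition WS :: "('a::field \<Rightarrow> 'v::ab_group_add \<Rightarrow> 'v) \<Rightarrow> ('v \<Rightarrow> 'v \<Rightarrow> 'a) \<Rightarrow> (nat \<Rightarrow> 'v set) \<Rightarrow> nat \<Rightarrow> ('v \<Rightarrow> 'v) set" where
  "WS scale b F p = {u \<in> b_symmetric_end scale b. nilpotent_end u \<and> stabilizes_flag u F p}"

definition WA :: "('a::field \<Rightarrow> 'v::ab_group_add \<Rightarrow> 'v) \<Rightarrow> ('v \<Rightarrow> 'v \<Rightarrow> 'a) \<Rightarrow> (nat \<Rightarrow> 'v set) \<Rightarrow> nat \<Rightarrow> ('v \<Rightarrow> 'v) set" where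
  "WA scale b F p = {u \<in> b_alternating_end scale b. nilpotent_end u \<and> stabilizes_flag u F p}"

end

theory Submission
  imports Defs
begin


lemma vs_mult: "vector_space ((*) :: 'a::field \<Rightarrow> 'a \<Rightarrow> 'a)"
  by unfold_locales (auto simp: algebra_simps)

lemma sum_fun_apply: "(sum f A) x = sum (\<lambda>i. f i x) A"
  by (induction A rule: infinite_finite_induct) auto

definition perp :: "('v \<Rightarrow> 'v \<Rightarrow> 'a::zero) \<Rightarrow> 'v set \<Rightarrow> 'v set" where
  "perp b S = {x. \<forall>y\<in>S. b y x = 0}"

locale bform = finite_dimensional_vector_space scale Basis
  for scale :: "'a::field \<Rightarrow> 'v::ab_group_add \<Rightarrow> 'v" (infixr \<open>*s\<close> 75) and Basis +
  fixes b :: "'v \<Rightarrow> 'v \<Rightarrow> 'a"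
  assumes bil: "bilinear_form scale b"
    and nd: "nondegenerate b"
    and orth: "b x y = 0 \<longleftrightarrow> b y x = 0"
begin

lemma linR: "Vector_Spaces.linear scale (*) (b x)"
  using bil unfolding bilinear_form_def by blast
lemma linL: "Vector_Spaces.linear scale (*) (\<lambda>x. b x y)"
  using bil unfolding bilinear_form_def by blast
lemma bR_add: "b x (y + z) = b x y + b x z"
  using linR[of x, unfolded Vector_Spaces.linear_iff] by blast
lemma bR_scale: "b x (c *s y) = c * b x y"
  using linR[of x, unfolded Vector_Spaces.linear_iff] by blast
lemma bL_add: "b (x + y) z = b x z + b y z"
  using linL[of z, unfolded Vector_Spaces.linear_iff] by blast
lemma bL_scale: "b (c *s x) z = c * b x z"
  using linL[of z, unfolded Vector_Spaces.linear_iff] by blast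
lemma bR_0[simp]: "b x 0 = 0"
  using bR_scale[of x 0 0] by simp
lemma bL_0[simp]: "b 0 x = 0"
  using bL_scale[of 0 0 x] by simp
lemma bR_neg: "b x (- y) = - b x y"
  using bR_add[of x y "-y"] by (simp add: eq_neg_iff_add_eq_0 add.commute)
lemma bL_neg: "b (- x) y = - b x y"
  using bL_add[of x "-x" y] by (simp add: eq_neg_iff_add_eq_0 add.commute)
lemma bR_diff: "b x (y - z) = b x y - b x z"
  using bR_add[of x y "-z"] bR_neg by simp
lemma bL_diff: "b (x - y) z = b x z - b y z"
  using bL_add[of x "-y" z] bL_neg by simp
lemma bR_sum: "b x (sum f A) = (\<Sum>i\<in>A. b x (f i))"
  by (induction A rule: infinite_finite_induct) (auto simp: bR_add)
lemma bL_sum: "b (sum f A) y = (\<Sum>i\<in>A. b (f i) y)"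
  by (induction A rule: infinite_finite_induct) (auto simp: bL_add)

lemmas b_simps = bR_add bR_scale bL_add bL_scale bR_neg bL_neg bR_diff bL_diff bR_sum bL_sum

lemma nd2: "(\<And>y. b y x = 0) \<Longrightarrow> x = 0"
  using nd orth unfolding nondegenerate_def by blast

lemma lin_b_left: "Vector_Spaces.linear scale (*) (\<lambda>x. b x y)"
  using bil unfolding bilinear_form_def by blast
lemma lin_b_right: "Vector_Spaces.linear scale (*) (b x)"
  using bil unfolding bilinear_form_def by blast

lemma zero_on_span_left: "x \<in> span S \<Longrightarrow> (\<And>s. s \<in> S \<Longrightarrow> b s y = 0) \<Longrightarrow> b x y = 0"
  by (induction rule: span_induct_alt) (auto simp: b_simps)

lemma zero_on_span_right: "x \<in> span S \<Longrightarrow> (\<And>s. s \<in> S \<Longrightarrow> b y s = 0) \<Longrightarrow> b y x = 0"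
  by (induction rule: span_induct_alt) (auto simp: b_simps)

lemma subspace_perp: "subspace (perp b S)"
  unfolding subspace_def perp_def by (auto simp: b_simps)

lemma span_idx: "x \<in> span (v ` {..<K::nat}) \<Longrightarrow> \<exists>a. x = (\<Sum>i<K. a i *s v i)"
proof (induction rule: span_induct_alt)
  case base
  then show ?case by (intro exI[of _ "\<lambda>_. 0"]) simp
next
  case (step c x y)
  then obtain l a where l: "l < K" "x = v l" and a: "y = (\<Sum>i<K. a i *s v i)" by auto
  have e1: "(\<Sum>i<K. (if i = l then c else 0) *s v i) = c *s v l"
  proof -
    have "(\<Sum>i<K. (if i = l then c else 0) *s v i) = (\<Sum>i<K. (if i = l then c *s v l else 0))"
      by (intro sum.cong) auto
    also have "\<dots> = c *s v l" using l by (simp add: sum.delta sum.delta')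
    finally show ?thesis .
  qed
  have "(\<Sum>i<K. ((if i = l then c else 0) + a i) *s v i)
        = (\<Sum>i<K. (if i = l then c else 0) *s v i) + (\<Sum>i<K. a i *s v i)"
    unfolding scale_left_distrib sum.distrib ..
  then have "c *s x + y = (\<Sum>i<K. ((if i = l then c else 0) + a i) *s v i)"
    using e1 l a by simp
  then show ?case by (rule exI[where x="\<lambda>i. (if i = l then c else 0) + a i"])
qed

lemma idx_in_span: "(\<Sum>i<(K::nat). a i *s v i) \<in> span (v ` {..<K})"
  by (intro span_sum span_scale span_base) auto

definition indep_on :: "(nat \<Rightarrow> 'v) \<Rightarrow> nat \<Rightarrow> bool" where
  "indep_on v K \<longleftrightarrow> (\<forall>a. (\<Sum>i<K. a i *s v i) = 0 \<longrightarrow> (\<forall>i<K. a i = 0))"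

lemma indep_onD: "indep_on v K \<Longrightarrow> (\<Sum>i<K. a i *s v i) = 0 \<Longrightarrow> i < K \<Longrightarrow> a i = 0"
  unfolding indep_on_def by blast

lemma indep_on_mono: "indep_on v K \<Longrightarrow> L \<le> K \<Longrightarrow> indep_on v L"
  unfolding indep_on_def
proof (intro allI impI)
  fix a i assume h: "\<forall>a. (\<Sum>i<K. a i *s v i) = 0 \<longrightarrow> (\<forall>i<K. a i = 0)" "L \<le> K"
    "(\<Sum>i<L. a i *s v i) = 0" "i < L"
  let ?a = "\<lambda>i. if i < L then a i else 0"
  have "(\<Sum>i<K. ?a i *s v i) = (\<Sum>i<L. a i *s v i)"
    using h(2) by (intro sum.mono_neutral_cong_right) auto
  moreover have "(\<Sum>i<K. ?a i *s v i) = 0 \<longrightarrow> (\<forall>i<K. ?a i = 0)" using h(1) by (rule spec)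
  ultimately have all0: "\<forall>i<K. ?a i = 0" using h(3) by simp
  have iK: "i < K" using h(2,4) by simp
  have "?a i = 0" using all0 iK by blast
  then show "a i = 0" using h(4) by simp
qed

lemma indep_on_imp: "indep_on v K \<Longrightarrow> inj_on v {..<K} \<and> independent (v ` {..<K})"
proof
  assume h: "indep_on v K"
  show "inj_on v {..<K}"
  proof (rule inj_onI, rule ccontr)
    fix i j assume ij: "i \<in> {..<K}" "j \<in> {..<K}" "v i = v j" "i \<noteq> j"
    let ?a = "\<lambda>l. (if l = i then 1 else 0) - (if l = j then 1 else (0::'a))"
    have "(\<Sum>l<K. ?a l *s v l) = (\<Sum>l<K. (if l = i then v l else 0)) - (\<Sum>l<K. (if l = j then v l else 0))"
      unfolding scale_left_diff_distrib sum_subtractf by (intro arg_cong2[where f="(-)"] sum.cong) auto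
    also have "\<dots> = 0" using ij by (simp add: sum.delta)
    moreover have "(\<Sum>l<K. ?a l *s v l) = 0 \<longrightarrow> (\<forall>l<K. ?a l = 0)"
      using h unfolding indep_on_def by (rule spec)
    ultimately have all0: "\<forall>l<K. ?a l = 0" by simp
    have "?a i = 0" using all0 ij(1) by blast
    then show False using ij(4) by simp
  qed
  then have inj: "inj_on v {..<K}" .
  show "independent (v ` {..<K})"
  proof
    assume "dependent (v ` {..<K})"
    moreover have "finite (v ` {..<K})" by simp
    ultimately obtain u where u: "\<exists>x\<in>v ` {..<K}. u x \<noteq> 0" "(\<Sum>x\<in>v ` {..<K}. u x *s x) = 0"
      using dependent_finite by metis
    have "(\<Sum>i<K. u (v i) *s v i) = 0" using u(2) inj by (simp add: sum.reindex)
    then have "\<forall>i<K. u (v i) = 0" using indep_onD[OF h, of "\<lambda>i. u (v i)"] by blast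
    then show False using u(1) by auto
  qed
qed

lemma imp_indep_on: assumes "inj_on v {..<K}" "independent (v ` {..<K})" shows "indep_on v K"
  unfolding indep_on_def
proof (intro allI impI)
  fix a i assume s: "(\<Sum>i<K. a i *s v i) = 0" and i: "i < K"
  let ?u = "\<lambda>x. a (the_inv_into {..<K} v x)"
  have "(\<Sum>x\<in>v ` {..<K}. ?u x *s x) = (\<Sum>i<K. ?u (v i) *s v i)"
    using assms(1) by (simp add: sum.reindex)
  also have "\<dots> = (\<Sum>i<K. a i *s v i)"
    using assms(1) by (intro sum.cong) (auto simp: the_inv_into_f_f)
  finally have "(\<Sum>x\<in>v ` {..<K}. ?u x *s x) = 0" using s by simp
  then have "?u (v i) = 0" using assms(2) i
    by (intro independentD[of "v ` {..<K}" "v ` {..<K}"]) auto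
  then show "a i = 0" using assms(1) i by (simp add: the_inv_into_f_f)
qed

end

context bform begin

lemma dual_exists:
  fixes \<beta> :: "'v \<Rightarrow> 'v \<Rightarrow> 'a"
  assumes rA: "\<And>x y z. \<beta> x (y + z) = \<beta> x y + \<beta> x z"
    and rS: "\<And>x c y. \<beta> x (c *s y) = c * \<beta> x y"
    and lA: "\<And>x y z. \<beta> (x + y) z = \<beta> x z + \<beta> y z"
    and lS: "\<And>c x z. \<beta> (c *s x) z = c * \<beta> x z"
    and ndg: "\<And>x. (\<And>y. \<beta> x y = 0) \<Longrightarrow> x = 0"
  shows "indep_on x K \<Longrightarrow> \<exists>y. \<forall>i<K. \<forall>j<K. \<beta> (x i) (y j) = (if i = j then 1 else 0)"
proof (induction K)
  case 0
  then show ?case by simp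
next
  case (Suc K)
  have r0: "\<beta> a 0 = 0" for a using rS[of a 0 0] by simp
  have l0: "\<beta> 0 a = 0" for a using lS[of 0 0 a] by simp
  have rD: "\<beta> a (p - q) = \<beta> a p - \<beta> a q" for a p q
    using rA[of a "p - q" q] by (simp add: algebra_simps)
  have lD: "\<beta> (p - q) a = \<beta> p a - \<beta> q a" for a p q
    using lA[of "p - q" q a] by (simp add: algebra_simps)
  have rSum: "\<beta> a (sum f A) = (\<Sum>i\<in>A. \<beta> a (f i))" for a f and A :: "nat set"
    by (induction A rule: infinite_finite_induct) (auto simp: rA r0)
  have lSum: "\<beta> (sum f A) a = (\<Sum>i\<in>A. \<beta> (f i) a)" for a f and A :: "nat set"
    by (induction A rule: infinite_finite_induct) (auto simp: lA l0)
  have indK: "indep_on x K" using Suc.prems indep_on_mono by auto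
  from Suc.IH[OF indK] obtain y where y: "\<And>i j. i < K \<Longrightarrow> j < K \<Longrightarrow> \<beta> (x i) (y j) = (if i = j then 1 else 0)"
    by blast
  define c where "c i = \<beta> (x K) (y i)" for i
  define z where "z = x K - (\<Sum>i<K. c i *s x i)"
  have "z \<noteq> 0"
  proof
    assume z0: "z = 0"
    let ?a = "\<lambda>i. if i < K then - c i else 1"
    have "(\<Sum>i<Suc K. ?a i *s x i) = (\<Sum>i<K. ?a i *s x i) + x K" by simp
    also have "(\<Sum>i<K. ?a i *s x i) = (\<Sum>i<K. - (c i *s x i))"
      by (intro sum.cong) (auto simp: scale_minus_left)
    also have "\<dots> = - (\<Sum>i<K. c i *s x i)" by (simp add: sum_negf)
    finally have "(\<Sum>i<Suc K. ?a i *s x i) = 0" using z0 unfolding z_def by simp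
    from indep_onD[OF Suc.prems this, of K] show False by simp
  qed
  then obtain t where t: "\<beta> z t \<noteq> 0" using ndg by blast
  define t1 where "t1 = inverse (\<beta> z t) *s t"
  have t1: "\<beta> z t1 = 1" using t unfolding t1_def by (simp add: rS)
  define y' where "y' = t1 - (\<Sum>i<K. \<beta> (x i) t1 *s y i)"
  have sdel: "(\<Sum>i<K. \<beta> (x i) t1 * \<beta> (x l) (y i)) = \<beta> (x l) t1" if "l < K" for l
  proof -
    have "(\<Sum>i<K. \<beta> (x i) t1 * \<beta> (x l) (y i)) = (\<Sum>i<K. if i = l then \<beta> (x l) t1 else 0)"
      using that by (intro sum.cong) (auto simp: y)
    also have "\<dots> = \<beta> (x l) t1" using that by simp
    finally show ?thesis .
  qed
  have y'1: "\<beta> (x l) y' = 0" if "l < K" for l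
    unfolding y'_def using sdel[OF that] by (simp add: rD rSum rS)
  have "\<beta> z y' = \<beta> z t1"
  proof -
    have "\<beta> z (y i) = 0" if "i < K" for i
    proof -
      have "(\<Sum>l<K. c l * \<beta> (x l) (y i)) = (\<Sum>l<K. if l = i then c i else 0)"
        using that by (intro sum.cong) (auto simp: y)
      then show ?thesis unfolding z_def using that by (simp add: lD lSum lS c_def)
    qed
    then show ?thesis unfolding y'_def by (simp add: rD rSum rS)
  qed
  then have zy': "\<beta> z y' = 1" using t1 by simp
  have y'K: "\<beta> (x K) y' = 1"
  proof -
    have "\<beta> (x K) y' = \<beta> z y' + (\<Sum>i<K. c i * \<beta> (x i) y')"
      unfolding z_def by (simp add: lD lSum lS)
    also have "(\<Sum>i<K. c i * \<beta> (x i) y') = 0" by (simp add: y'1)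
    finally show ?thesis using zy' by simp
  qed
  define Y where "Y j = (if j < K then y j - c j *s y' else y')" for j
  show ?case
  proof (intro exI[of _ Y] allI impI)
    fix i j assume i: "i < Suc K" and j: "j < Suc K"
    show "\<beta> (x i) (Y j) = (if i = j then 1 else 0)"
    proof (cases "j < K")
      case True
      then show ?thesis
      proof (cases "i < K")
        case True
        then show ?thesis using \<open>j < K\<close> by (simp add: Y_def rD rS y y'1)
      next
        case False
        then have "i = K" using i by simp
        then show ?thesis using \<open>j < K\<close> by (simp add: Y_def rD rS y'K c_def)
      qed
    next
      case False
      then have "j = K" using j by simp
      then show ?thesis using i y'1 y'K by (cases "i < K") (auto simp: Y_def less_Suc_eq)
    qed
  qed
qed

end

context bform begin

lemma vs: "vector_space scale" by (rule vector_space_axioms)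

lemma lin_add: "Vector_Spaces.linear scale scale u \<Longrightarrow> u (x + y) = u x + u y"
  unfolding Vector_Spaces.linear_iff by blast
lemma lin_scale: "Vector_Spaces.linear scale scale u \<Longrightarrow> u (c *s x) = c *s u x"
  unfolding Vector_Spaces.linear_iff by blast
lemma lin_0: "Vector_Spaces.linear scale scale u \<Longrightarrow> u 0 = 0"
  using lin_scale[of u 0 0] by simp
lemma lin_sum: "Vector_Spaces.linear scale scale u \<Longrightarrow> u (sum f A) = (\<Sum>i\<in>A. u (f i))"
  by (induction A rule: infinite_finite_induct) (auto simp: lin_add lin_0)
lemma lin_neg: "Vector_Spaces.linear scale scale u \<Longrightarrow> u (- x) = - u x"
  using lin_scale[of u "-1" x] by simp
lemma lin_diff: "Vector_Spaces.linear scale scale u \<Longrightarrow> u (x - y) = u x - u y"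
  using lin_add[of u x "-y"] lin_neg[of u y] by simp

lemma lin_funpow: "Vector_Spaces.linear scale scale u \<Longrightarrow> Vector_Spaces.linear scale scale (u ^^ k)"
proof (induction k)
  case 0
  then show ?case using vs by (simp add: vector_space.linear_ident)
next
  case (Suc k)
  then show ?case using Vector_Spaces.linear_compose[of scale scale "u^^k" scale u] by (simp add: comp_def)
qed

lemma lin_image_span: "Vector_Spaces.linear scale scale u \<Longrightarrow> u ` S \<subseteq> T \<Longrightarrow> subspace T
   \<Longrightarrow> x \<in> span S \<Longrightarrow> u x \<in> T"
proof -
  assume l: "Vector_Spaces.linear scale scale u" and s: "u ` S \<subseteq> T" "subspace T"
  show "x \<in> span S \<Longrightarrow> u x \<in> T"
  proof (induction rule: span_induct_alt)
    case base
    then show ?case using s(2) lin_0[OF l] by (simp add: subspace_0)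
  next
    case (step c x y)
    then show ?case using s l by (simp add: lin_add lin_scale subspace_add subspace_scale image_subset_iff)
  qed
qed

end

locale setup3 = bform scale Basis b
  for scale :: "'a::field \<Rightarrow> 'v::ab_group_add \<Rightarrow> 'v" (infixr \<open>*s\<close> 75) and Basis b +
  fixes F :: "nat \<Rightarrow> 'v set" and \<nu> m :: nat and v w w' :: "nat \<Rightarrow> 'v"
  assumes A1: "\<And>i. i \<le> \<nu> \<Longrightarrow> F i = span (v ` {..<i})"
    and A2: "perp b (F \<nu>) = span (v ` {..<\<nu>+m})"
    and A3: "\<And>i j. i < \<nu>+m+\<nu> \<Longrightarrow> j < \<nu>+m+\<nu> \<Longrightarrow> b (w' j) (v i) = (if j = i then 1 else 0)"
    and A4: "\<And>x. x = (\<Sum>i<\<nu>+m+\<nu>. b (w' i) x *s v i)"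
    and A5: "\<And>i j. i < \<nu>+m+\<nu> \<Longrightarrow> j < \<nu>+m+\<nu> \<Longrightarrow> b (v i) (w j) = (if i = j then 1 else 0)"
    and A6: "\<And>i. i < \<nu> \<Longrightarrow> \<exists>s. w (\<nu>+m+i) = s *s v i"
    and A7: "\<And>k l. k < \<nu> \<Longrightarrow> l < \<nu> \<Longrightarrow> l \<noteq> k \<Longrightarrow> b (v (\<nu>+m+k)) (v l) = 0"
    and A8: "totally_singular scale b (F \<nu>)"
    and A9: "\<And>X. totally_singular scale b X \<Longrightarrow> dim X \<le> \<nu>"
    and A10: "dim (F \<nu>) = \<nu>"
    and A11: "\<And>j. j < \<nu> \<Longrightarrow> v j \<notin> F j"
begin

abbreviation "n \<equiv> \<nu>+m+\<nu>"

lemma R: "z = (\<Sum>k<n. b (v k) z *s w k)"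
proof -
  define d where "d = z - (\<Sum>k<n. b (v k) z *s w k)"
  have dv: "b (v i) d = 0" if "i < n" for i
  proof -
    have "(\<Sum>k<n. b (v k) z * b (v i) (w k)) = (\<Sum>k<n. if k = i then b (v i) z else 0)"
      using that by (intro sum.cong) (auto simp: A5)
    then show ?thesis using that unfolding d_def by (simp add: b_simps)
  qed
  have "b y d = 0" for y
  proof -
    have "b y d = b (\<Sum>i<n. b (w' i) y *s v i) d" using A4[of y] by simp
    also have "\<dots> = 0" by (simp add: b_simps dv)
    finally show ?thesis .
  qed
  then have "d = 0" using nd2 by blast
  then show ?thesis unfolding d_def by simp
qed

lemma bw: "k < n \<Longrightarrow> b x (w k) = b (w' k) x"
proof -
  assume k: "k < n"
  have "b x (w k) = b (\<Sum>i<n. b (w' i) x *s v i) (w k)" using A4[of x] by simp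
  also have "\<dots> = (\<Sum>i<n. b (w' i) x * b (v i) (w k))" by (simp add: b_simps)
  also have "\<dots> = (\<Sum>i<n. if i = k then b (w' k) x else 0)"
    using k by (intro sum.cong) (auto simp: A5)
  also have "\<dots> = b (w' k) x" using k by simp
  finally show ?thesis .
qed

definition op :: "(nat \<Rightarrow> nat \<Rightarrow> 'a) \<Rightarrow> 'v \<Rightarrow> 'v" where
  "op M x = (\<Sum>j<n. \<Sum>k<n. (b (w' j) x * M k j) *s w k)"

definition Th :: "('v \<Rightarrow> 'v) \<Rightarrow> nat \<Rightarrow> nat \<Rightarrow> 'a" where
  "Th u i j = b (v i) (u (v j))"

lemma op_lin: "Vector_Spaces.linear scale scale (op M)"
  unfolding Vector_Spaces.linear_iff
proof (intro conjI allI)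
  show "vector_space scale" by (rule vs)
  show "vector_space scale" by (rule vs)
  fix x y
  show "op M (x + y) = op M x + op M y"
    unfolding op_def by (simp add: bR_add distrib_right scale_left_distrib sum.distrib)
next
  fix c x
  show "op M (c *s x) = c *s op M x"
    unfolding op_def by (simp add: bR_scale scale_sum_right mult.assoc)
qed

lemma Th_op: "i < n \<Longrightarrow> j < n \<Longrightarrow> Th (op M) i j = M i j"
proof -
  assume i: "i < n" and j: "j < n"
  have "Th (op M) i j = (\<Sum>j'<n. \<Sum>k<n. b (w' j') (v j) * M k j' * b (v i) (w k))"
    unfolding Th_def op_def by (simp add: b_simps)
  also have "\<dots> = (\<Sum>j'<n. if j' = j then M i j else 0)"
  proof (intro sum.cong refl)
    fix j' assume j': "j' \<in> {..<n}"
    have "(\<Sum>k<n. b (w' j') (v j) * M k j' * b (v i) (w k)) = (\<Sum>k<n. if k = i then b (w' j') (v j) * M i j' else 0)"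
      using i by (intro sum.cong) (auto simp: A5)
    also have "\<dots> = b (w' j') (v j) * M i j'" using i by simp
    also have "\<dots> = (if j' = j then M i j else 0)" using j j' by (simp add: A3)
    finally show "(\<Sum>k<n. b (w' j') (v j) * M k j' * b (v i) (w k)) = (if j' = j then M i j else 0)" .
  qed
  also have "\<dots> = M i j" using j by simp
  finally show ?thesis .
qed

lemma op_Th: "Vector_Spaces.linear scale scale u \<Longrightarrow> op (Th u) = u"
proof
  fix x assume l: "Vector_Spaces.linear scale scale u"
  have "u x = u (\<Sum>j<n. b (w' j) x *s v j)" using A4[of x] by simp
  also have "\<dots> = (\<Sum>j<n. b (w' j) x *s u (v j))" by (simp add: lin_sum[OF l] lin_scale[OF l])
  also have "\<dots> = (\<Sum>j<n. b (w' j) x *s (\<Sum>k<n. b (v k) (u (v j)) *s w k))"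
    using R by metis
  also have "\<dots> = op (Th u) x" unfolding op_def Th_def by (simp add: scale_sum_right)
  finally show "op (Th u) x = u x" by simp
qed

lemma b_op: "b x (op M y) = (\<Sum>j<n. \<Sum>k<n. b (w' j) y * M k j * b (w' k) x)"
  unfolding op_def by (simp add: b_simps bw)

lemma Th_lin: "Th (\<lambda>x. u x + u' x) i j = Th u i j + Th u' i j" "Th (\<lambda>x. c *s u x) i j = c * Th u i j"
  unfolding Th_def by (simp_all add: b_simps)

end

context setup3 begin

definition adj0 :: "('v \<Rightarrow> 'v) \<Rightarrow> bool" where
  "adj0 u \<longleftrightarrow> (\<forall>x y. b x (u y) = 0 \<longleftrightarrow> b y (u x) = 0)"

definition tri :: "('v \<Rightarrow> 'v) \<Rightarrow> bool" where
  "tri u \<longleftrightarrow> (\<forall>j<\<nu>. u (v j) \<in> F j) \<and> (\<forall>x\<in>perp b (F \<nu>). u x \<in> F \<nu>)"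

definition Zpos :: "nat \<Rightarrow> nat \<Rightarrow> bool" where
  "Zpos i j \<longleftrightarrow> (i < \<nu>+m \<and> j < \<nu>+m) \<or> (\<nu>+m \<le> i \<and> j < \<nu> \<and> j \<le> i - (\<nu>+m))"

lemma Fsub: "i \<le> \<nu> \<Longrightarrow> subspace (F i)"
  using A1 by simp

lemma Fmono: "i \<le> j \<Longrightarrow> j \<le> \<nu> \<Longrightarrow> F i \<subseteq> F j"
  using A1[of i] A1[of j] by (simp add: span_mono image_mono)

lemma F0: "F 0 = {0}"
  using A1[of 0] by (simp add: span_empty)

lemma vF: "l < i \<Longrightarrow> i \<le> \<nu> \<Longrightarrow> v l \<in> F i"
  using A1[of i] by (simp add: span_base)

lemma vP: "l < \<nu>+m \<Longrightarrow> v l \<in> perp b (F \<nu>)"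
  using A2 by (simp add: span_base)

lemma FSuc: "i < \<nu> \<Longrightarrow> F (Suc i) = span (insert (v i) (v ` {..<i}))"
  using A1[of "Suc i"] by (simp add: lessThan_Suc)

lemma perpD: "x \<in> perp b S \<Longrightarrow> y \<in> S \<Longrightarrow> b x y = 0"
  unfolding perp_def using orth by blast

lemma perpD': "x \<in> perp b S \<Longrightarrow> y \<in> S \<Longrightarrow> b y x = 0"
  unfolding perp_def by blast

lemma W_ts: "x \<in> F \<nu> \<Longrightarrow> y \<in> F \<nu> \<Longrightarrow> b x y = 0"
  using A8 unfolding totally_singular_def by blast

lemma pow_zero_iff:
  assumes "adj0 u"
  shows "b ((u^^k) a) c = 0 \<longleftrightarrow> b a ((u^^k) c) = 0"
proof (induction k arbitrary: c)
  case 0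
  then show ?case by simp
next
  case (Suc k)
  have "b ((u^^Suc k) a) c = 0 \<longleftrightarrow> b (u ((u^^k) a)) c = 0" by simp
  also have "\<dots> \<longleftrightarrow> b c (u ((u^^k) a)) = 0" using orth by blast
  also have "\<dots> \<longleftrightarrow> b ((u^^k) a) (u c) = 0" using assms unfolding adj0_def by blast
  also have "\<dots> \<longleftrightarrow> b a ((u^^k) (u c)) = 0" using Suc.IH by blast
  also have "(u^^k) (u c) = (u^^Suc k) c" by (simp add: funpow_swap1)
  finally show ?case .
qed

lemma CH1:
  assumes lin: "Vector_Spaces.linear scale scale u" and adj: "adj0 u"
    and nil: "nilpotent_end u" and stab: "stabilizes_flag u F \<nu>"
  shows "tri u"
proof -
  obtain N where N: "u ^^ N = (\<lambda>_. 0)" using nil unfolding nilpotent_end_def by blast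
  have st: "i \<le> \<nu> \<Longrightarrow> y \<in> F i \<Longrightarrow> u y \<in> F i" for i y
    using stab unfolding stabilizes_flag_def by blast
  have c1: "u (v j) \<in> F j" if j: "j < \<nu>" for j
  proof -
    have "u (v j) \<in> F (Suc j)" using st[of "Suc j"] vF[of j "Suc j"] j by simp
    then obtain c where c: "u (v j) - c *s v j \<in> F j"
      using FSuc[OF j] A1[of j] j span_breakdown_eq by auto
    define r0 where "r0 = u (v j) - c *s v j"
    have uvj: "u (v j) = c *s v j + r0" unfolding r0_def by simp
    have Fj: "subspace (F j)" using Fsub j by simp
    have pw: "(u^^t) (v j) - (c^t) *s v j \<in> F j" for t
    proof (induction t)
      case 0
      then show ?case using Fj by (simp add: subspace_0)
    next
      case (Suc t)
      define r where "r = (u^^t) (v j) - (c^t) *s v j"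
      have "(u^^Suc t) (v j) = u (r + c^t *s v j)" unfolding r_def by simp
      also have "\<dots> = u r + c^t *s (c *s v j + r0)" using uvj by (simp add: lin_add[OF lin] lin_scale[OF lin])
      finally have "(u^^Suc t) (v j) - (c^Suc t) *s v j = u r + c^t *s r0"
        by (simp add: scale_right_distrib mult.commute)
      moreover have "u r \<in> F j" using st[of j r] Suc j unfolding r_def by simp
      moreover have "c^t *s r0 \<in> F j" using c Fj unfolding r0_def by (simp add: subspace_scale)
      ultimately show ?case using Fj by (simp add: subspace_add)
    qed
    have "c = 0"
    proof (rule ccontr)
      assume c0: "c \<noteq> 0"
      have "- ((c^N) *s v j) \<in> F j" using pw[of N] N by simp
      then have "(c^N) *s v j \<in> F j" using Fj by (metis minus_minus subspace_neg)
      then have "inverse (c^N) *s ((c^N) *s v j) \<in> F j" by (rule subspace_scale[OF Fj])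
      moreover have "c^N \<noteq> 0" using c0 by simp
      ultimately have "v j \<in> F j" by simp
      then show False using A11 j by blast
    qed
    then show ?thesis using c by simp
  qed
  let ?P = "perp b (F \<nu>)"
  have c2: "u x \<in> ?P" if "x \<in> ?P" for x
    unfolding perp_def
  proof (intro CollectI ballI)
    fix y assume y: "y \<in> F \<nu>"
    have "u y \<in> F \<nu>" using st y by simp
    then have "b x (u y) = 0" using perpD[OF that] by blast
    then show "b y (u x) = 0" using adj unfolding adj0_def by blast
  qed
  have powP: "(u^^k) x \<in> ?P" if "x \<in> ?P" for x k
    using that by (induction k) (auto simp: c2)
  have powW: "(u^^k) x \<in> F \<nu>" if "x \<in> F \<nu>" for x k
    using that by (induction k) (auto simp: st)
  define Q where "Q t \<longleftrightarrow> (\<forall>x\<in>?P. (u^^Suc t) x \<in> F \<nu>)" for t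
  have step: "Q t" if "Q (Suc t)" for t
  proof -
    define s where "s = Suc t"
    define Y where "Y = (u^^s) ` ?P"
    have linp: "Vector_Spaces.linear scale scale (u^^s)" using lin_funpow[OF lin] by blast
    have subY: "subspace Y" unfolding Y_def
      using module_hom.subspace_image[of scale scale "u^^s" ?P] linp subspace_perp
      by (simp add: module_hom_iff_linear)
    have YP: "Y \<subseteq> ?P" unfolding Y_def using powP by blast
    have Yts: "b y1 y2 = 0" if yy: "y1 \<in> Y" "y2 \<in> Y" for y1 y2
    proof -
      obtain x1 x2 where x: "x1 \<in> ?P" "x2 \<in> ?P" "y1 = (u^^s) x1" "y2 = (u^^s) x2"
        using yy unfolding Y_def by blast
      have "(u^^s) ((u^^s) x2) = (u^^(s+s)) x2" by (simp only: funpow_add comp_def)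
      also have "s+s = t + Suc (Suc t)" by (simp add: s_def)
      also have "(u^^(t + Suc (Suc t))) x2 = (u^^t) ((u^^Suc (Suc t)) x2)" by (simp only: funpow_add comp_def)
      finally have "(u^^s) ((u^^s) x2) = (u^^t) ((u^^Suc (Suc t)) x2)" .
      moreover have "(u^^Suc (Suc t)) x2 \<in> F \<nu>" using \<open>Q (Suc t)\<close> x(2) unfolding Q_def by blast
      ultimately have "(u^^s) ((u^^s) x2) \<in> F \<nu>" using powW by simp
      then have "b x1 ((u^^s) ((u^^s) x2)) = 0" using perpD[OF x(1)] by blast
      then show ?thesis using pow_zero_iff[OF adj] x by blast
    qed
    define T where "T = {a + y |a y. a \<in> F \<nu> \<and> y \<in> Y}"
    have subT: "subspace T" unfolding T_def using subspace_sums[OF Fsub[of \<nu>] subY] by simp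
    have Tts: "totally_singular scale b T" unfolding totally_singular_def
    proof (intro conjI ballI subT)
      fix p q assume "p \<in> T" "q \<in> T"
      then obtain a1 y1 a2 y2 where pq: "p = a1 + y1" "q = a2 + y2" "a1 \<in> F \<nu>" "y1 \<in> Y" "a2 \<in> F \<nu>" "y2 \<in> Y"
        unfolding T_def by blast
      have "b a1 a2 = 0" using W_ts pq by blast
      moreover have "b a1 y2 = 0" using perpD'[of y2] YP pq by blast
      moreover have "b y1 a2 = 0" using perpD[of y1] YP pq by blast
      moreover have "b y1 y2 = 0" using Yts pq by blast
      ultimately show "b p q = 0" using pq by (simp add: bL_add bR_add)
    qed
    have WT: "F \<nu> \<subseteq> T" unfolding T_def
    proof
      fix a assume "a \<in> F \<nu>"
      moreover have "0 \<in> Y" using subY by (simp add: subspace_0)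
      ultimately show "a \<in> {a + y |a y. a \<in> F \<nu> \<and> y \<in> Y}" by force
    qed
    have "F \<nu> = T" using subspace_dim_equal[OF Fsub[of \<nu>] subT WT] A9[OF Tts] A10 by simp
    moreover have "Y \<subseteq> T" unfolding T_def
    proof
      fix y assume "y \<in> Y"
      moreover have "0 \<in> F \<nu>" using Fsub[of \<nu>] by (simp add: subspace_0)
      ultimately show "y \<in> {a + y |a y. a \<in> F \<nu> \<and> y \<in> Y}" by force
    qed
    ultimately have "Y \<subseteq> F \<nu>" by simp
    then show "Q t" unfolding Q_def Y_def s_def by blast
  qed
  have QN: "Q N" unfolding Q_def
  proof
    fix x show "(u ^^ Suc N) x \<in> F \<nu>"
      using N Fsub[of \<nu>] lin_0[OF lin] by (simp add: funpow_swap1 subspace_0)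
  qed
  have "Q k \<Longrightarrow> Q 0" for k by (induction k) (auto intro: step)
  then have "Q 0" using QN by blast
  then have "\<forall>x\<in>?P. u x \<in> F \<nu>" unfolding Q_def by simp
  then show ?thesis unfolding tri_def using c1 by blast
qed

lemma CH2:
  assumes tri: "tri u" and i: "i < n" and j: "j < n" and Z: "Zpos i j"
  shows "Th u i j = 0"
proof (cases "i < \<nu>+m \<and> j < \<nu>+m")
  case True
  then have "u (v j) \<in> F \<nu>" using tri vP unfolding tri_def by blast
  then show ?thesis unfolding Th_def using perpD[OF vP[of i]] True by blast
next
  case False
  then have h: "\<nu>+m \<le> i" "j < \<nu>" "j \<le> i - (\<nu>+m)" using Z unfolding Zpos_def by auto
  define k where "k = i - (\<nu>+m)"
  have k: "k < \<nu>" "i = \<nu>+m+k" using h i unfolding k_def by auto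
  have "u (v j) \<in> span (v ` {..<j})" using tri h A1[of j] unfolding tri_def by auto
  then show ?thesis unfolding Th_def
  proof (rule zero_on_span_right)
    fix s assume "s \<in> v ` {..<j}"
    then obtain l where l: "l < j" "s = v l" by blast
    then have "l \<noteq> k" "l < \<nu>" using h unfolding k_def by auto
    then show "b (v i) s = 0" using A7[of k l] k l by simp
  qed
qed

lemma CH3:
  assumes lin: "Vector_Spaces.linear scale scale u"
    and Z: "\<And>i j. i < n \<Longrightarrow> j < n \<Longrightarrow> Zpos i j \<Longrightarrow> Th u i j = 0"
  shows "tri u"
proof -
  have key: "u (v j) \<in> F (if j < \<nu> then j else \<nu>)" if j: "j < \<nu>+m" for j
  proof -
    define L where "L = (if j < \<nu> then j else \<nu>)"
    have L: "L \<le> \<nu>" unfolding L_def by simp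
    have "u (v j) = (\<Sum>k<n. Th u k j *s w k)" unfolding Th_def using R by metis
    also have "\<dots> \<in> F L"
      unfolding A1[OF L]
    proof (intro span_sum)
      fix k assume k: "k \<in> {..<n}"
      show "Th u k j *s w k \<in> span (v ` {..<L})"
      proof (cases "Zpos k j")
        case True
        then show ?thesis using Z k j by (simp add: span_zero)
      next
        case False
        then have k': "\<nu>+m \<le> k" "k - (\<nu>+m) < L" using j k unfolding Zpos_def L_def by auto
        define k'' where "k'' = k - (\<nu>+m)"
        have "k'' < \<nu>" using k k' unfolding k''_def by auto
        then obtain s where "w (\<nu>+m+k'') = s *s v k''" using A6 by blast
        moreover have "\<nu>+m+k'' = k" using k' unfolding k''_def by simp
        moreover have "v k'' \<in> span (v ` {..<L})" using k' unfolding k''_def by (simp add: span_base)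
        ultimately show ?thesis by (simp add: span_scale)
      qed
    qed
    finally show ?thesis unfolding L_def .
  qed
  have c1: "\<forall>j<\<nu>. u (v j) \<in> F j"
  proof (intro allI impI)
    fix j assume j: "j < \<nu>"
    then have "j < \<nu> + m" by simp
    from key[OF this] j show "u (v j) \<in> F j" by simp
  qed
  have "u x \<in> F \<nu>" if "x \<in> perp b (F \<nu>)" for x
  proof (rule lin_image_span[OF lin _ Fsub[of \<nu>]])
    show "x \<in> span (v ` {..<\<nu>+m})" using that A2 by simp
    show "u ` v ` {..<\<nu> + m} \<subseteq> F \<nu>"
    proof
      fix y assume "y \<in> u ` v ` {..<\<nu> + m}"
      then obtain j where j: "j < \<nu>+m" "y = u (v j)" by auto
      then show "y \<in> F \<nu>" using key[OF j(1)] Fmono[of "if j < \<nu> then j else \<nu>" \<nu>] by (auto split: if_splits)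
    qed
  qed simp
  then show ?thesis unfolding tri_def using c1 by blast
qed

lemma CH4:
  assumes lin: "Vector_Spaces.linear scale scale u" and adj: "adj0 u" and tri: "tri u"
  shows "nilpotent_end u \<and> stabilizes_flag u F \<nu>"
proof -
  have c1: "u (v l) \<in> F l" if "l < \<nu>" for l using tri that unfolding tri_def by blast
  have down: "u y \<in> F i" if i: "i < \<nu>" and y: "y \<in> F (Suc i)" for i y
  proof (rule lin_image_span[OF lin _ Fsub])
    show "y \<in> span (v ` {..<Suc i})" using y A1[of "Suc i"] i by simp
    show "u ` v ` {..<Suc i} \<subseteq> F i"
    proof
      fix z assume "z \<in> u ` v ` {..<Suc i}"
      then obtain l where l: "l < Suc i" "z = u (v l)" by blast
      then show "z \<in> F i" using c1[of l] Fmono[of l i] i by auto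
    qed
  qed (use i in simp)
  have stab: "stabilizes_flag u F \<nu>" unfolding stabilizes_flag_def
  proof (intro allI impI)
    fix i assume i: "i \<le> \<nu>"
    show "u ` F i \<subseteq> F i"
    proof (cases i)
      case 0
      then show ?thesis using F0 lin_0[OF lin] by simp
    next
      case (Suc i')
      then show ?thesis using down[of i'] Fmono[of i' "Suc i'"] i by auto
    qed
  qed
  have filt: "u x \<in> perp b (F (Suc i))" if i: "i < \<nu>" and x: "x \<in> perp b (F i)" for i x
    unfolding perp_def
  proof (intro CollectI ballI)
    fix y assume "y \<in> F (Suc i)"
    then have y: "y \<in> span (v ` {..<Suc i})" using A1[of "Suc i"] i by simp
    show "b y (u x) = 0"
    proof (rule zero_on_span_left[OF y])
      fix s assume "s \<in> v ` {..<Suc i}"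
      then obtain l where l: "l < Suc i" "s = v l" by blast
      have "u (v l) \<in> F i" using c1[of l] Fmono[of l i] i l by auto
      then have "b x (u (v l)) = 0" using perpD[OF x] by blast
      then show "b s (u x) = 0" using adj l unfolding adj0_def by blast
    qed
  qed
  have p1: "(u^^t) x \<in> perp b (F t)" if "t \<le> \<nu>" for t x
    using that
  proof (induction t)
    case 0
    then show ?case using F0 by (simp add: perp_def)
  next
    case (Suc t)
    then show ?case using filt[of t "(u^^t) x"] by simp
  qed
  have p2: "(u^^t) y \<in> F (\<nu> - t)" if "t \<le> \<nu>" "y \<in> F \<nu>" for t y
    using that
  proof (induction t)
    case 0
    then show ?case by simp
  next
    case (Suc t)
    then have "(u^^t) y \<in> F (Suc (\<nu> - Suc t))" by (simp add: Suc_diff_Suc)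
    then show ?case using down[of "\<nu> - Suc t" "(u^^t) y"] Suc by simp
  qed
  have "(u ^^ (\<nu> + Suc \<nu>)) = (\<lambda>_. 0)"
  proof
    fix x
    have "(u^^\<nu>) x \<in> perp b (F \<nu>)" using p1 by simp
    then have "u ((u^^\<nu>) x) \<in> F \<nu>" using tri unfolding tri_def by blast
    then have "(u^^\<nu>) (u ((u^^\<nu>) x)) \<in> F 0" using p2[of \<nu>] by simp
    then show "(u ^^ (\<nu> + Suc \<nu>)) x = 0" using F0 by (simp add: funpow_add funpow_swap1)
  qed
  then show ?thesis using stab unfolding nilpotent_end_def by blast
qed

end


lemma quad_alt:
  fixes M :: "nat \<Rightarrow> nat \<Rightarrow> 'a::comm_ring"
  assumes "\<forall>i<K. M i i = 0" "\<forall>i<K. \<forall>j<K. M i j = - M j i"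
  shows "(\<Sum>j<K. \<Sum>k<K. a j * M k j * a k) = 0"
  using assms
proof (induction K)
  case 0
  show ?case by simp
next
  case (Suc K)
  have p1: "\<forall>i<K. M i i = 0" "\<forall>i<K. \<forall>j<K. M i j = - M j i" using Suc.prems less_SucI by blast+
  have IH: "(\<Sum>j<K. \<Sum>k<K. a j * M k j * a k) = 0" using Suc.IH[OF p1] .
  have "(\<Sum>j<Suc K. \<Sum>k<Suc K. a j * M k j * a k)
      = (\<Sum>j<K. (\<Sum>k<K. a j * M k j * a k) + a j * M K j * a K) + ((\<Sum>k<K. a K * M k K * a k) + a K * M K K * a K)"
    by (simp only: sum.lessThan_Suc)
  also have "\<dots> = (\<Sum>j<K. \<Sum>k<K. a j * M k j * a k) + (\<Sum>j<K. a j * M K j * a K + a K * M j K * a j)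
        + a K * M K K * a K"
    by (simp only: sum.distrib) (simp add: algebra_simps)
  also have "(\<Sum>j<K. a j * M K j * a K + a K * M j K * a j) = 0"
  proof (intro sum.neutral ballI)
    fix j assume "j \<in> {..<K}"
    then have "j < Suc K" "K < Suc K" by auto
    then have "M K j = - M j K" using Suc.prems(2) by blast
    then show "a j * M K j * a K + a K * M j K * a j = 0" by (simp add: algebra_simps)
  qed
  also have "M K K = 0" using Suc.prems(1) by blast
  finally show ?case using IH by simp
qed
lemma vs_end: "vector_space scale \<Longrightarrow> vector_space (end_scale scale)"
  unfolding vector_space_def end_scale_def
  by (auto simp: fun_eq_iff algebra_simps)

context setup3 begin

definition symM :: "(nat \<Rightarrow> nat \<Rightarrow> 'a) \<Rightarrow> bool" where
  "symM M \<longleftrightarrow> (\<forall>i<n. \<forall>j<n. M i j = M j i)"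
definition altM :: "(nat \<Rightarrow> nat \<Rightarrow> 'a) \<Rightarrow> bool" where
  "altM M \<longleftrightarrow> (\<forall>i<n. M i i = 0) \<and> (\<forall>i<n. \<forall>j<n. M i j = - M j i)"
definition zeroM :: "(nat \<Rightarrow> nat \<Rightarrow> 'a) \<Rightarrow> bool" where
  "zeroM M \<longleftrightarrow> (\<forall>i<n. \<forall>j<n. Zpos i j \<longrightarrow> M i j = 0)"

lemma alt_skew:
  assumes lin: "Vector_Spaces.linear scale scale u" and alt: "\<And>x. b x (u x) = 0"
  shows "b x (u y) = - b y (u x)"
proof -
  have "0 = b (x + y) (u (x + y))" using alt by simp
  also have "\<dots> = b x (u x) + b x (u y) + b y (u x) + b y (u y)"
    by (simp add: lin_add[OF lin] b_simps)
  finally show ?thesis using alt by (simp add: eq_neg_iff_add_eq_0)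
qed

lemma G2S: assumes "u \<in> WS scale b F \<nu>" shows "symM (Th u) \<and> zeroM (Th u)"
proof -
  have lin: "Vector_Spaces.linear scale scale u" and sy: "\<And>x y. b x (u y) = b y (u x)"
    and nil: "nilpotent_end u" and st: "stabilizes_flag u F \<nu>"
    using assms unfolding WS_def b_symmetric_end_def End_def by auto
  have adj: "adj0 u" unfolding adj0_def using sy by simp
  have "tri u" using CH1[OF lin adj nil st] .
  have z: "zeroM (Th u)" unfolding zeroM_def
  proof (intro allI impI)
    fix i j assume "i < n" "j < n" "Zpos i j"
    then show "Th u i j = 0" using CH2[OF \<open>tri u\<close>] by blast
  qed
  have "symM (Th u)" unfolding symM_def Th_def using sy by simp
  then show ?thesis using z by simp
qed

lemma G2A: assumes "u \<in> WA scale b F \<nu>" shows "altM (Th u) \<and> zeroM (Th u)"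
proof -
  have lin: "Vector_Spaces.linear scale scale u" and al: "\<And>x. b x (u x) = 0"
    and nil: "nilpotent_end u" and st: "stabilizes_flag u F \<nu>"
    using assms unfolding WA_def b_alternating_end_def End_def by auto
  have sk: "b x (u y) = - b y (u x)" for x y using alt_skew[OF lin al] .
  have adj: "adj0 u" unfolding adj0_def
  proof (intro allI)
    fix x y show "(b x (u y) = 0) = (b y (u x) = 0)" using sk[of x y] by simp
  qed
  have "tri u" using CH1[OF lin adj nil st] .
  have z: "zeroM (Th u)" unfolding zeroM_def
  proof (intro allI impI)
    fix i j assume "i < n" "j < n" "Zpos i j"
    then show "Th u i j = 0" using CH2[OF \<open>tri u\<close>] by blast
  qed
  have "altM (Th u)" unfolding altM_def Th_def
  proof (intro conjI allI impI)
    fix i assume "i < n" show "b (v i) (u (v i)) = 0" by (rule al)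
  next
    fix i j assume "i < n" "j < n"
    show "b (v i) (u (v j)) = - b (v j) (u (v i))" by (rule sk)
  qed
  then show ?thesis using z by simp
qed

lemma op_zero_tri: "zeroM M \<Longrightarrow> tri (op M)"
  by (rule CH3[OF op_lin]) (simp add: Th_op zeroM_def)

lemma G1S: assumes "symM M" "zeroM M" shows "op M \<in> WS scale b F \<nu>"
proof -
  have sy: "b x (op M y) = b y (op M x)" for x y
  proof -
    have "b x (op M y) = (\<Sum>j<n. \<Sum>k<n. b (w' j) y * M k j * b (w' k) x)" by (rule b_op)
    also have "\<dots> = (\<Sum>k<n. \<Sum>j<n. b (w' j) y * M k j * b (w' k) x)" by (rule sum.swap)
    also have "\<dots> = (\<Sum>k<n. \<Sum>j<n. b (w' k) x * M j k * b (w' j) y)"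
      using assms(1) unfolding symM_def by (intro sum.cong refl) (simp add: mult.commute)
    also have "\<dots> = b y (op M x)" by (rule b_op[symmetric])
    finally show ?thesis .
  qed
  have adj: "adj0 (op M)" unfolding adj0_def using sy by simp
  have "nilpotent_end (op M) \<and> stabilizes_flag (op M) F \<nu>"
    using CH4[OF op_lin adj op_zero_tri[OF assms(2)]] .
  then show ?thesis unfolding WS_def b_symmetric_end_def End_def using op_lin sy by auto
qed

lemma G1A: assumes "altM M" "zeroM M" shows "op M \<in> WA scale b F \<nu>"
proof -
  have al: "b x (op M x) = 0" for x
  proof -
    have "b x (op M x) = (\<Sum>j<n. \<Sum>k<n. b (w' j) x * M k j * b (w' k) x)" by (rule b_op)
    also have "\<dots> = 0"
    proof (rule quad_alt)
      show "\<forall>i<n. M i i = 0" "\<forall>i<n. \<forall>j<n. M i j = - M j i" using assms(1) unfolding altM_def by blast+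
    qed
    finally show ?thesis .
  qed
  have sk: "b x (op M y) = - b y (op M x)" for x y using alt_skew[OF op_lin al] .
  have adj: "adj0 (op M)" unfolding adj0_def
  proof (intro allI)
    fix x y show "(b x (op M y) = 0) = (b y (op M x) = 0)" using sk[of x y] by simp
  qed
  have "nilpotent_end (op M) \<and> stabilizes_flag (op M) F \<nu>"
    using CH4[OF op_lin adj op_zero_tri[OF assms(2)]] .
  then show ?thesis unfolding WA_def b_alternating_end_def End_def using op_lin al by auto
qed

lemma op_cong: "(\<And>i j. i < n \<Longrightarrow> j < n \<Longrightarrow> M i j = M' i j) \<Longrightarrow> op M = op M'"
  unfolding op_def by (intro ext sum.cong refl) auto

lemma op_sum: "op (\<lambda>i j. \<Sum>p\<in>P. c p * B p i j) = (\<Sum>p\<in>P. end_scale scale (c p) (op (B p)))"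
proof
  fix x
  have "(\<Sum>p\<in>P. end_scale scale (c p) (op (B p))) x = (\<Sum>p\<in>P. c p *s op (B p) x)"
    by (simp add: sum_fun_apply end_scale_def)
  also have "\<dots> = (\<Sum>p\<in>P. \<Sum>j<n. \<Sum>k<n. (c p * (b (w' j) x * B p k j)) *s w k)"
    unfolding op_def by (simp add: scale_sum_right)
  also have "\<dots> = (\<Sum>j<n. \<Sum>p\<in>P. \<Sum>k<n. (c p * (b (w' j) x * B p k j)) *s w k)"
    by (rule sum.swap)
  also have "\<dots> = (\<Sum>j<n. \<Sum>k<n. \<Sum>p\<in>P. (c p * (b (w' j) x * B p k j)) *s w k)"
    by (intro sum.cong refl sum.swap)
  also have "\<dots> = op (\<lambda>i j. \<Sum>p\<in>P. c p * B p i j) x"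
    unfolding op_def
    by (intro sum.cong refl) (simp add: sum_distrib_left scale_sum_left algebra_simps)
  finally show "op (\<lambda>i j. \<Sum>p\<in>P. c p * B p i j) x = (\<Sum>p\<in>P. end_scale scale (c p) (op (B p))) x" by simp
qed

end

context setup3 begin

lemma Th_zero: "Th (\<lambda>_. 0) i j = 0" unfolding Th_def by simp

lemma dim_family:
  fixes S :: "('v \<Rightarrow> 'v) set" and P :: "(nat \<times> nat) set" and B :: "nat \<times> nat \<Rightarrow> nat \<Rightarrow> nat \<Rightarrow> 'a"
  assumes finP: "finite P" and Pn: "\<And>p. p \<in> P \<Longrightarrow> fst p < n \<and> snd p < n"
    and delta: "\<And>p q. p \<in> P \<Longrightarrow> q \<in> P \<Longrightarrow> B q (fst p) (snd p) = (if q = p then 1 else 0)"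
    and inS: "\<And>c. op (\<lambda>i j. \<Sum>p\<in>P. c p * B p i j) \<in> S"
    and spS: "\<And>u. u \<in> S \<Longrightarrow> \<exists>c. u = op (\<lambda>i j. \<Sum>p\<in>P. c p * B p i j)"
  shows "module.subspace (end_scale scale) S \<and> vector_space.dim (end_scale scale) S = card P"
proof -
  interpret es: vector_space "end_scale scale" by (rule vs_end[OF vs])
  have ev: "Th (op (\<lambda>i j. \<Sum>q\<in>P. c q * B q i j)) (fst p) (snd p) = c p" if p: "p \<in> P" for c p
  proof -
    have "Th (op (\<lambda>i j. \<Sum>q\<in>P. c q * B q i j)) (fst p) (snd p) = (\<Sum>q\<in>P. c q * B q (fst p) (snd p))"
      using Pn[OF p] by (simp add: Th_op)
    also have "\<dots> = (\<Sum>q\<in>P. if q = p then c p else 0)"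
      using p by (intro sum.cong refl) (simp add: delta)
    also have "\<dots> = c p" using p finP by simp
    finally show ?thesis .
  qed
  have opB: "op (B p) = op (\<lambda>i j. \<Sum>q\<in>P. (if q = p then 1 else 0) * B q i j)" if "p \<in> P" for p
  proof -
    have "(\<Sum>q\<in>P. (if q = p then 1 else 0) * B q i j) = B p i j" for i j
    proof -
      have "(\<Sum>q\<in>P. (if q = p then 1 else 0) * B q i j) = (\<Sum>q\<in>P. if q = p then B p i j else 0)"
        by (intro sum.cong refl) simp
      also have "\<dots> = B p i j" using that finP by simp
      finally show ?thesis .
    qed
    then show ?thesis by simp
  qed
  have inj: "inj_on (\<lambda>p. op (B p)) P"
  proof (rule inj_onI)
    fix p q assume pq: "p \<in> P" "q \<in> P" "op (B p) = op (B q)"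
    have "Th (op (B p)) (fst q) (snd q) = (if p = q then 1 else 0)"
      using ev[OF pq(2), of "\<lambda>r. if r = p then 1 else 0"] opB[OF pq(1)] by simp
    moreover have "Th (op (B q)) (fst q) (snd q) = 1"
      using ev[OF pq(2), of "\<lambda>r. if r = q then 1 else 0"] opB[OF pq(2)] by simp
    ultimately show "p = q" using pq(3) by (auto split: if_splits)
  qed
  define BS where "BS = (\<lambda>p. op (B p)) ` P"
  have finBS: "finite BS" unfolding BS_def using finP by simp
  have reidx: "(\<Sum>\<phi>\<in>BS. end_scale scale (c \<phi>) \<phi>) = op (\<lambda>i j. \<Sum>p\<in>P. c (op (B p)) * B p i j)" for c
    unfolding BS_def using inj by (simp add: sum.reindex op_sum)
  have spanBS: "es.span BS = S"
  proof
    show "es.span BS \<subseteq> S"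
      unfolding es.span_finite[OF finBS] using reidx inS by auto
    show "S \<subseteq> es.span BS"
    proof
      fix u assume "u \<in> S"
      then obtain c where c: "u = op (\<lambda>i j. \<Sum>p\<in>P. c p * B p i j)" using spS by blast
      have "u = (\<Sum>p\<in>P. end_scale scale (c p) (op (B p)))" using c op_sum by simp
      also have "\<dots> \<in> es.span BS"
        unfolding BS_def by (intro es.span_sum es.span_scale es.span_base) auto
      finally show "u \<in> es.span BS" .
    qed
  qed
  have indep: "\<not> es.dependent BS"
  proof
    assume "es.dependent BS"
    then obtain c where c: "\<exists>\<phi>\<in>BS. c \<phi> \<noteq> 0" "(\<Sum>\<phi>\<in>BS. end_scale scale (c \<phi>) \<phi>) = 0"
      using es.dependent_finite[OF finBS] by blast
    obtain p where p: "p \<in> P" "c (op (B p)) \<noteq> 0" using c(1) unfolding BS_def by blast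
    have "op (\<lambda>i j. \<Sum>q\<in>P. c (op (B q)) * B q i j) = (\<lambda>_. 0)" using c(2) reidx by (simp add: zero_fun_def)
    then have "Th (op (\<lambda>i j. \<Sum>q\<in>P. c (op (B q)) * B q i j)) (fst p) (snd p) = 0" by (simp add: Th_zero)
    then show False using ev[OF p(1), of "\<lambda>q. c (op (B q))"] p(2) by simp
  qed
  have "es.dim S = card BS" using es.dim_span_eq_card_independent[OF indep] spanBS by simp
  also have "card BS = card P" unfolding BS_def using inj by (simp add: card_image)
  finally show ?thesis using spanBS es.subspace_span by metis
qed

end

context setup3 begin

definition PS :: "(nat \<times> nat) set" where
  "PS = {(i, j). j < n \<and> \<nu>+m \<le> j \<and> j - (\<nu>+m) < i \<and> i \<le> j}"
definition PA :: "(nat \<times> nat) set" where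
  "PA = {(i, j). j < n \<and> \<nu>+m \<le> j \<and> j - (\<nu>+m) < i \<and> i < j}"

definition SS :: "nat \<times> nat \<Rightarrow> nat \<Rightarrow> nat \<Rightarrow> 'a" where
  "SS p i j = (if p = (i, j) \<or> p = (j, i) then 1 else 0)"
definition EE :: "nat \<times> nat \<Rightarrow> nat \<Rightarrow> nat \<Rightarrow> 'a" where
  "EE p i j = (if p = (i, j) then 1 else 0)"
definition SA :: "nat \<times> nat \<Rightarrow> nat \<Rightarrow> nat \<Rightarrow> 'a" where
  "SA p i j = EE p i j - EE p j i"

lemma PS_img: "PS = (\<lambda>(k, i). (i, \<nu>+m+k)) ` (SIGMA k:{..<\<nu>}. {k<..\<nu>+m+k})"
proof
  show "PS \<subseteq> (\<lambda>(k, i). (i, \<nu>+m+k)) ` (SIGMA k:{..<\<nu>}. {k<..\<nu>+m+k})"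
  proof
    fix p assume "p \<in> PS"
    then obtain i j where p: "p = (i, j)" "j < n" "\<nu>+m \<le> j" "j - (\<nu>+m) < i" "i \<le> j"
      unfolding PS_def by blast
    then have "(j - (\<nu>+m), i) \<in> (SIGMA k:{..<\<nu>}. {k<..\<nu>+m+k})" by auto
    moreover have "p = (\<lambda>(k, i). (i, \<nu>+m+k)) (j - (\<nu>+m), i)" using p by auto
    ultimately show "p \<in> (\<lambda>(k, i). (i, \<nu>+m+k)) ` (SIGMA k:{..<\<nu>}. {k<..\<nu>+m+k})" by blast
  qed
  show "(\<lambda>(k, i). (i, \<nu>+m+k)) ` (SIGMA k:{..<\<nu>}. {k<..\<nu>+m+k}) \<subseteq> PS"
    unfolding PS_def by auto
qed

lemma PA_img: "PA = (\<lambda>(k, i). (i, \<nu>+m+k)) ` (SIGMA k:{..<\<nu>}. {k<..<\<nu>+m+k})"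
proof
  show "PA \<subseteq> (\<lambda>(k, i). (i, \<nu>+m+k)) ` (SIGMA k:{..<\<nu>}. {k<..<\<nu>+m+k})"
  proof
    fix p assume "p \<in> PA"
    then obtain i j where p: "p = (i, j)" "j < n" "\<nu>+m \<le> j" "j - (\<nu>+m) < i" "i < j"
      unfolding PA_def by blast
    then have "(j - (\<nu>+m), i) \<in> (SIGMA k:{..<\<nu>}. {k<..<\<nu>+m+k})" by auto
    moreover have "p = (\<lambda>(k, i). (i, \<nu>+m+k)) (j - (\<nu>+m), i)" using p by auto
    ultimately show "p \<in> (\<lambda>(k, i). (i, \<nu>+m+k)) ` (SIGMA k:{..<\<nu>}. {k<..<\<nu>+m+k})" by blast
  qed
  show "(\<lambda>(k, i). (i, \<nu>+m+k)) ` (SIGMA k:{..<\<nu>}. {k<..<\<nu>+m+k}) \<subseteq> PA"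
    unfolding PA_def by auto
qed

lemma inj_kI: "inj_on (\<lambda>(k, i). (i, \<nu>+m+k)) A"
  by (rule inj_onI) auto

lemma card_PS: "card PS = \<nu> * (\<nu>+m)"
proof -
  have "card PS = card (SIGMA k:{..<\<nu>}. {k<..\<nu>+m+k})"
    unfolding PS_img by (rule card_image[OF inj_kI])
  also have "\<dots> = (\<Sum>k<\<nu>. card {k<..\<nu>+m+k})" by (simp add: card_SigmaI)
  also have "\<dots> = \<nu> * (\<nu>+m)" by simp
  finally show ?thesis .
qed

lemma card_PA: "card PA = \<nu> * (\<nu>+m-1)"
proof -
  have "card PA = card (SIGMA k:{..<\<nu>}. {k<..<\<nu>+m+k})"
    unfolding PA_img by (rule card_image[OF inj_kI])
  also have "\<dots> = (\<Sum>k<\<nu>. card {k<..<\<nu>+m+k})" by (simp add: card_SigmaI)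
  also have "\<dots> = (\<Sum>k<\<nu>. \<nu>+m-1)" by (intro sum.cong refl) simp
  also have "\<dots> = \<nu> * (\<nu>+m-1)" by simp
  finally show ?thesis .
qed

lemma finPS: "finite PS" unfolding PS_img by simp
lemma finPA: "finite PA" unfolding PA_img by simp

lemma PS_nZ: "(i, j) \<in> PS \<Longrightarrow> \<not> Zpos i j \<and> \<not> Zpos j i"
  unfolding PS_def Zpos_def by auto
lemma PA_nZ: "(i, j) \<in> PA \<Longrightarrow> \<not> Zpos i j \<and> \<not> Zpos j i"
  unfolding PA_def Zpos_def by auto

lemma cover: "i < n \<Longrightarrow> j < n \<Longrightarrow> i \<noteq> j \<Longrightarrow> (i, j) \<notin> PA \<Longrightarrow> (j, i) \<notin> PA \<Longrightarrow> Zpos i j \<or> Zpos j i"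
  unfolding PA_def Zpos_def by auto

lemma coverS: "i < n \<Longrightarrow> j < n \<Longrightarrow> (i, j) \<notin> PS \<Longrightarrow> (j, i) \<notin> PS \<Longrightarrow> Zpos i j \<or> Zpos j i"
  unfolding PS_def Zpos_def by auto

lemma PS_n: "p \<in> PS \<Longrightarrow> fst p < n \<and> snd p < n" unfolding PS_def by auto
lemma PA_n: "p \<in> PA \<Longrightarrow> fst p < n \<and> snd p < n" unfolding PA_def by auto

lemma sum_SS: "(\<Sum>p\<in>PS. c p * SS p i j) = (\<Sum>p\<in>PS \<inter> {(i, j), (j, i)}. c p)"
  unfolding SS_def using finPS by (simp add: sum.inter_restrict if_distrib cong: if_cong)

lemma sum_EE: "(\<Sum>p\<in>P. c p * EE p i j) = (if (i, j) \<in> P then c (i, j) else 0)" if "finite P"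
proof -
  have "(\<Sum>p\<in>P. c p * EE p i j) = (\<Sum>p\<in>P. if p = (i, j) then c (i, j) else 0)"
    unfolding EE_def by (intro sum.cong refl) simp
  also have "\<dots> = (if (i, j) \<in> P then c (i, j) else 0)" using that by simp
  finally show ?thesis .
qed

lemma sum_SA: "(\<Sum>p\<in>PA. c p * SA p i j)
   = (if (i, j) \<in> PA then c (i, j) else 0) - (if (j, i) \<in> PA then c (j, i) else 0)"
proof -
  have "(\<Sum>p\<in>PA. c p * SA p i j) = (\<Sum>p\<in>PA. c p * EE p i j) - (\<Sum>p\<in>PA. c p * EE p j i)"
    unfolding SA_def by (simp add: right_diff_distrib sum_subtractf)
  then show ?thesis using sum_EE[OF finPA] by simp
qed

lemma WS_res: "module.subspace (end_scale scale) (WS scale b F \<nu>)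
   \<and> vector_space.dim (end_scale scale) (WS scale b F \<nu>) = \<nu> * (\<nu>+m)"
  unfolding card_PS[symmetric]
proof (rule dim_family[OF finPS PS_n])
  fix p q assume pq: "p \<in> PS" "q \<in> PS"
  then show "SS q (fst p) (snd p) = (if q = p then 1 else 0)"
    unfolding SS_def PS_def by auto
next
  fix c
  define M where "M = (\<lambda>i j. \<Sum>p\<in>PS. c p * SS p i j)"
  have "symM M" unfolding symM_def M_def SS_def by (auto intro!: sum.cong)
  moreover have "zeroM M" unfolding zeroM_def
  proof (intro allI impI)
    fix i j assume "i < n" "j < n" "Zpos i j"
    then have "PS \<inter> {(i, j), (j, i)} = {}" using PS_nZ by auto
    then show "M i j = 0" unfolding M_def sum_SS by simp
  qed
  ultimately show "op (\<lambda>i j. \<Sum>p\<in>PS. c p * SS p i j) \<in> WS scale b F \<nu>"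
    using G1S unfolding M_def by blast
next
  fix u assume u: "u \<in> WS scale b F \<nu>"
  have lin: "Vector_Spaces.linear scale scale u" using u unfolding WS_def b_symmetric_end_def End_def by auto
  have sz: "symM (Th u)" "zeroM (Th u)" using G2S[OF u] by auto
  define c where "c p = Th u (fst p) (snd p)" for p
  have "u = op (Th u)" using op_Th[OF lin] by simp
  also have "\<dots> = op (\<lambda>i j. \<Sum>p\<in>PS. c p * SS p i j)"
  proof (rule op_cong)
    fix i j assume ij: "i < n" "j < n"
    have symu: "Th u j i = Th u i j" using sz(1) ij unfolding symM_def by blast
    show "Th u i j = (\<Sum>p\<in>PS. c p * SS p i j)"
    proof (cases "(i, j) \<in> PS")
      case True
      have "PS \<inter> {(i, j), (j, i)} = {(i, j)}" using True unfolding PS_def by auto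
      then show ?thesis unfolding sum_SS c_def by simp
    next
      case f1: False
      show ?thesis
      proof (cases "(j, i) \<in> PS")
        case True
        have "PS \<inter> {(i, j), (j, i)} = {(j, i)}" using True f1 by auto
        then show ?thesis unfolding sum_SS c_def using symu by simp
      next
        case False
        then have "PS \<inter> {(i, j), (j, i)} = {}" using f1 by auto
        moreover have "Th u i j = 0"
        proof -
          have "Zpos i j \<or> Zpos j i" using coverS[OF ij f1 False] .
          then show ?thesis using sz(2) ij symu unfolding zeroM_def by auto
        qed
        ultimately show ?thesis unfolding sum_SS by simp
      qed
    qed
  qed
  finally show "\<exists>c. u = op (\<lambda>i j. \<Sum>p\<in>PS. c p * SS p i j)" by blast
qed

lemma WA_res: "module.subspace (end_scale scale) (WA scale b F \<nu>)
   \<and> vector_space.dim (end_scale scale) (WA scale b F \<nu>) = \<nu> * (\<nu>+m-1)"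
  unfolding card_PA[symmetric]
proof (rule dim_family[OF finPA PA_n])
  fix p q assume pq: "p \<in> PA" "q \<in> PA"
  then show "SA q (fst p) (snd p) = (if q = p then 1 else 0)"
    unfolding SA_def EE_def PA_def by auto
next
  fix c
  define M where "M = (\<lambda>i j. \<Sum>p\<in>PA. c p * SA p i j)"
  have "altM M" unfolding altM_def M_def sum_SA by auto
  moreover have "zeroM M" unfolding zeroM_def
  proof (intro allI impI)
    fix i j assume "i < n" "j < n" "Zpos i j"
    then have "(i, j) \<notin> PA" "(j, i) \<notin> PA" using PA_nZ by auto
    then show "M i j = 0" unfolding M_def sum_SA by simp
  qed
  ultimately show "op (\<lambda>i j. \<Sum>p\<in>PA. c p * SA p i j) \<in> WA scale b F \<nu>"
    using G1A unfolding M_def by blast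
next
  fix u assume u: "u \<in> WA scale b F \<nu>"
  have lin: "Vector_Spaces.linear scale scale u" using u unfolding WA_def b_alternating_end_def End_def by auto
  have sz: "altM (Th u)" "zeroM (Th u)" using G2A[OF u] by auto
  define c where "c p = Th u (fst p) (snd p)" for p
  have "u = op (Th u)" using op_Th[OF lin] by simp
  also have "\<dots> = op (\<lambda>i j. \<Sum>p\<in>PA. c p * SA p i j)"
  proof (rule op_cong)
    fix i j assume ij: "i < n" "j < n"
    have sku: "Th u i j = - Th u j i" using sz(1) ij unfolding altM_def by blast
    have dg: "Th u i i = 0" using sz(1) ij unfolding altM_def by blast
    show "Th u i j = (\<Sum>p\<in>PA. c p * SA p i j)"
    proof (cases "(i, j) \<in> PA")
      case True
      then have "(j, i) \<notin> PA" unfolding PA_def by auto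
      then show ?thesis unfolding sum_SA c_def using True by simp
    next
      case f1: False
      show ?thesis
      proof (cases "(j, i) \<in> PA")
        case True
        then show ?thesis unfolding sum_SA c_def using f1 sku by simp
      next
        case False
        have "Th u i j = 0"
        proof (cases "i = j")
          case True
          then show ?thesis using dg by simp
        next
          case ne: False
          have "Zpos i j \<or> Zpos j i" using cover[OF ij ne f1 False] .
          moreover have "Zpos i j \<Longrightarrow> Th u i j = 0" using sz(2) ij unfolding zeroM_def by blast
          moreover have "Zpos j i \<Longrightarrow> Th u j i = 0" using sz(2) ij unfolding zeroM_def by blast
          ultimately show ?thesis using sku by auto
        qed
        then show ?thesis unfolding sum_SA using f1 False by simp
      qed
    qed
  qed
  finally show "\<exists>c. u = op (\<lambda>i j. \<Sum>p\<in>PA. c p * SA p i j)" by blast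
qed

end


lemma sum_split: "(\<Sum>i<a+(c::nat). f i) = (\<Sum>i<a. f i) + (\<Sum>k<c. f (a+k))"
  by (induction c) (simp_all add: add.assoc)

context bform begin

lemma build:
  assumes flag: "is_flag scale F \<nu>" and pc: "partially_complete scale F \<nu>"
    and sing: "totally_singular scale b (F \<nu>)"
    and witt: "\<And>X. totally_singular scale b X \<Longrightarrow> dim X \<le> \<nu>"
  shows "\<exists>m v w w'. setup3 scale Basis b F \<nu> m v w w' \<and> dim (UNIV::'v set) = \<nu>+m+\<nu>"
proof -
  have Fsub: "subspace (F i)" if "i \<le> \<nu>" for i using flag that unfolding is_flag_def by blast
  have Fmon: "F i \<subseteq> F (Suc i)" if "i < \<nu>" for i using flag that unfolding is_flag_def by blast
  have Fdim: "dim (F i) = i" if "i \<le> \<nu>" for i using pc that unfolding partially_complete_def by blast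
  define e where "e i = (SOME x. x \<in> F (Suc i) \<and> x \<notin> F i)" for i
  have e: "e i \<in> F (Suc i) \<and> e i \<notin> F i" if i: "i < \<nu>" for i
  proof -
    have "F i \<noteq> F (Suc i)" using Fdim[of i] Fdim[of "Suc i"] i by auto
    then have "\<exists>x. x \<in> F (Suc i) \<and> x \<notin> F i" using Fmon[OF i] by blast
    then show ?thesis unfolding e_def by (rule someI_ex)
  qed
  have eind: "F i = span (e ` {..<i}) \<and> independent (e ` {..<i}) \<and> inj_on e {..<i}" if "i \<le> \<nu>" for i
    using that
  proof (induction i)
    case 0
    have "F 0 \<subseteq> {0}" using Fdim[of 0] by simp
    moreover have "0 \<in> F 0" using Fsub[of 0] by (simp add: subspace_0)
    ultimately have "F 0 = {0}" by blast
    then show ?case by (simp add: span_empty independent_empty)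
  next
    case (Suc i)
    then have i: "i < \<nu>" by simp
    have IH: "F i = span (e ` {..<i})" "independent (e ` {..<i})" "inj_on e {..<i}" using Suc by auto
    have eo: "e i \<notin> span (e ` {..<i})" using e[OF i] IH(1) by simp
    have ins: "e ` {..<Suc i} = insert (e i) (e ` {..<i})" by (simp add: lessThan_Suc)
    have indep: "independent (e ` {..<Suc i})" unfolding ins using independent_insertI[OF eo IH(2)] .
    have eo2: "e i \<notin> e ` {..<i}"
    proof
      assume "e i \<in> e ` {..<i}"
      then have "e i \<in> span (e ` {..<i})" by (rule span_base)
      with eo show False by simp
    qed
    have inj: "inj_on e {..<Suc i}" unfolding lessThan_Suc using IH(3) eo2 by (simp add: inj_on_insert)
    have sub: "span (e ` {..<Suc i}) \<subseteq> F (Suc i)"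
    proof (rule span_minimal)
      show "subspace (F (Suc i))" using Fsub Suc by simp
      have "e ` {..<i} \<subseteq> F i" unfolding IH(1) by (rule span_superset)
      then show "e ` {..<Suc i} \<subseteq> F (Suc i)" unfolding ins using e[OF i] Fmon[OF i] by auto
    qed
    have "dim (span (e ` {..<Suc i})) = Suc i"
      using dim_span_eq_card_independent[OF indep] card_image[OF inj] by simp
    then have "span (e ` {..<Suc i}) = F (Suc i)"
      using subspace_dim_equal[OF subspace_span Fsub[of "Suc i"] sub] Suc Fdim[of "Suc i"] by simp
    then show ?case using indep inj by simp
  qed
  let ?E = "e ` {..<\<nu>}"
  have W: "F \<nu> = span ?E" "independent ?E" "inj_on e {..<\<nu>}" using eind[of \<nu>] by auto
  have eW: "e i \<in> F \<nu>" if "i < \<nu>" for i using W(1) that by (simp add: span_base)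
  have Wts: "b x y = 0" if "x \<in> F \<nu>" "y \<in> F \<nu>" for x y using sing that unfolding totally_singular_def by blast
  have eind_on: "indep_on e \<nu>" using imp_indep_on[OF W(3) W(2)] .
  obtain f where f: "\<And>i j. i < \<nu> \<Longrightarrow> j < \<nu> \<Longrightarrow> b (e i) (f j) = (if i = j then 1 else 0)"
    using dual_exists[OF bR_add bR_scale bL_add bL_scale, of e \<nu>] nd eind_on unfolding nondegenerate_def
    by metis
  let ?P = "perp b (F \<nu>)"
  have EP: "?E \<subseteq> ?P" unfolding perp_def using Wts eW by auto
  obtain B where B: "?E \<subseteq> B" "B \<subseteq> ?P" "independent B" "?P \<subseteq> span B"
    using maximal_independent_subset_extend[OF EP W(2)] by blast
  have finB: "finite B" using finiteI_independent[OF B(3)] .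
  define G where "G = B - ?E"
  define m where "m = card G"
  obtain g where g: "bij_betw g {..<m} G"
    using ex_bij_betw_nat_finite[of G] finB unfolding G_def m_def by (auto simp: atLeast0LessThan)
  define v where "v i = (if i < \<nu> then e i else if i < \<nu>+m then g (i - \<nu>) else f (i - (\<nu>+m)))" for i
  have vB: "v ` {..<\<nu>+m} = B"
  proof
    show "v ` {..<\<nu>+m} \<subseteq> B"
    proof
      fix y assume "y \<in> v ` {..<\<nu>+m}"
      then obtain i where i: "i < \<nu>+m" "y = v i" by blast
      show "y \<in> B"
      proof (cases "i < \<nu>")
        case True then show ?thesis using i B(1) unfolding v_def by auto
      next
        case False
        then have "i - \<nu> < m" using i by simp
        then have "g (i - \<nu>) \<in> G" using g unfolding bij_betw_def by blast
        then show ?thesis using i False unfolding v_def G_def by auto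
      qed
    qed
    show "B \<subseteq> v ` {..<\<nu>+m}"
    proof
      fix y assume y: "y \<in> B"
      show "y \<in> v ` {..<\<nu>+m}"
      proof (cases "y \<in> ?E")
        case True
        then obtain i where "i < \<nu>" "y = e i" by blast
        then show ?thesis unfolding v_def by (intro image_eqI[of _ _ i]) auto
      next
        case False
        then have "y \<in> G" using y unfolding G_def by blast
        then obtain k where k: "k < m" "y = g k" using g unfolding bij_betw_def by auto
        then show ?thesis unfolding v_def by (intro image_eqI[of _ _ "\<nu>+k"]) auto
      qed
    qed
  qed
  have cardB: "card B = \<nu> + m"
  proof -
    have "card B = card ?E + card G" unfolding G_def using finB B(1)
      by (metis card_Diff_subset finite_subset le_add_diff_inverse card_mono)
    also have "card ?E = \<nu>" using card_image[OF W(3)] by simp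
    finally show ?thesis unfolding m_def by simp
  qed
  have vinj: "inj_on v {..<\<nu>+m}"
    by (rule eq_card_imp_inj_on) (use vB cardB in simp_all)
  have vind1: "indep_on v (\<nu>+m)" using imp_indep_on[OF vinj] vB B(3) by simp
  have A2: "?P = span (v ` {..<\<nu>+m})"
  proof
    show "?P \<subseteq> span (v ` {..<\<nu>+m})" using B(4) vB by simp
    show "span (v ` {..<\<nu>+m}) \<subseteq> ?P" using vB B(2) span_minimal subspace_perp by simp
  qed
  have vP: "b y (v i) = 0" if "i < \<nu>+m" "y \<in> F \<nu>" for i y
  proof -
    have "v i \<in> ?P" using that vB B(2) by blast
    then show ?thesis using that unfolding perp_def by blast
  qed
  have vf: "v (\<nu>+m+k) = f k" for k unfolding v_def by simp
  have ve: "v i = e i" if "i < \<nu>" for i using that unfolding v_def by simp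
  have sum_fpart: "b (e l) (\<Sum>k<\<nu>. a k *s f k) = a l" if "l < \<nu>" for l a
  proof -
    have "b (e l) (\<Sum>k<\<nu>. a k *s f k) = (\<Sum>k<\<nu>. a k * b (e l) (f k))" by (simp add: b_simps)
    also have "\<dots> = (\<Sum>k<\<nu>. if k = l then a l else 0)" using that by (intro sum.cong refl) (auto simp: f)
    also have "\<dots> = a l" using that by simp
    finally show ?thesis .
  qed
  have sum_vpart: "b (e l) (\<Sum>i<\<nu>+m. a i *s v i) = 0" if "l < \<nu>" for l a
    using vP[OF _ eW[OF that]] by (simp add: b_simps)
  have vind: "indep_on v (\<nu>+m+\<nu>)" unfolding indep_on_def
  proof (intro allI impI)
    fix a i assume s: "(\<Sum>i<\<nu>+m+\<nu>. a i *s v i) = 0" and i: "i < \<nu>+m+\<nu>"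
    have spl: "(\<Sum>i<\<nu>+m+\<nu>. a i *s v i) = (\<Sum>i<\<nu>+m. a i *s v i) + (\<Sum>k<\<nu>. a (\<nu>+m+k) *s f k)"
      by (simp add: sum_split vf)
    have a2: "a (\<nu>+m+l) = 0" if "l < \<nu>" for l
    proof -
      have "0 = b (e l) (\<Sum>i<\<nu>+m+\<nu>. a i *s v i)" using s by simp
      also have "\<dots> = a (\<nu>+m+l)" unfolding spl bR_add sum_vpart[OF that] sum_fpart[OF that] by simp
      finally show ?thesis by simp
    qed
    have "(\<Sum>k<\<nu>. a (\<nu>+m+k) *s f k) = 0" using a2 by simp
    then have "(\<Sum>i<\<nu>+m. a i *s v i) = 0" using s spl by simp
    then have a1: "a i = 0" if "i < \<nu>+m" for i using indep_onD[OF vind1] that by blast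
    show "a i = 0"
    proof (cases "i < \<nu>+m")
      case True then show ?thesis using a1 by blast
    next
      case False
      then have "i = \<nu>+m+(i-(\<nu>+m))" "i - (\<nu>+m) < \<nu>" using i by auto
      then show ?thesis using a2 by metis
    qed
  qed
  have vspan: "\<exists>a. x = (\<Sum>i<\<nu>+m+\<nu>. a i *s v i)" for x
  proof -
    define x' where "x' = x - (\<Sum>k<\<nu>. b (e k) x *s f k)"
    have "x' \<in> ?P" unfolding perp_def
    proof (intro CollectI ballI)
      fix y assume "y \<in> F \<nu>"
      then have y: "y \<in> span ?E" using W(1) by simp
      show "b y x' = 0"
      proof (rule zero_on_span_left[OF y])
        fix s assume "s \<in> ?E"
        then obtain l where l: "l < \<nu>" "s = e l" by blast
        show "b s x' = 0" unfolding x'_def l(2) bR_diff sum_fpart[OF l(1)] by simp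
      qed
    qed
    then obtain a where a: "x' = (\<Sum>i<\<nu>+m. a i *s v i)" using A2 span_idx by blast
    define a' where "a' i = (if i < \<nu>+m then a i else b (e (i - (\<nu>+m))) x)" for i
    have "(\<Sum>i<\<nu>+m+\<nu>. a' i *s v i) = (\<Sum>i<\<nu>+m. a' i *s v i) + (\<Sum>k<\<nu>. a' (\<nu>+m+k) *s f k)"
      by (simp add: sum_split vf)
    also have "(\<Sum>i<\<nu>+m. a' i *s v i) = x'" unfolding a a'_def by simp
    also have "(\<Sum>k<\<nu>. a' (\<nu>+m+k) *s f k) = (\<Sum>k<\<nu>. b (e k) x *s f k)" unfolding a'_def by simp
    finally have "(\<Sum>i<\<nu>+m+\<nu>. a' i *s v i) = x" unfolding x'_def by simp
    then show ?thesis by metis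
  qed
  let ?n = "\<nu>+m+\<nu>"
  have dimU: "dim (UNIV::'v set) = ?n"
  proof -
    have ii: "inj_on v {..<?n}" "independent (v ` {..<?n})" using indep_on_imp[OF vind] by auto
    have "span (v ` {..<?n}) = UNIV" using vspan idx_in_span by (metis UNIV_eq_I)
    then have "dim (UNIV::'v set) = dim (v ` {..<?n})" using dim_span by metis
    also have "\<dots> = ?n" using dim_eq_card_independent[OF ii(2)] card_image[OF ii(1)] by simp
    finally show ?thesis .
  qed
  obtain w where w: "\<And>i j. i < ?n \<Longrightarrow> j < ?n \<Longrightarrow> b (v i) (w j) = (if i = j then 1 else 0)"
    using dual_exists[OF bR_add bR_scale bL_add bL_scale, of v ?n] nd vind unfolding nondegenerate_def
    by metis
  obtain w' where w': "\<And>i j. i < ?n \<Longrightarrow> j < ?n \<Longrightarrow> b (w' j) (v i) = (if i = j then 1 else 0)"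
    using dual_exists[of "\<lambda>x y. b y x", OF bL_add bL_scale bR_add bR_scale, of v ?n] nd2 vind
    by metis
  have A4: "x = (\<Sum>i<?n. b (w' i) x *s v i)" for x
  proof -
    obtain a where a: "x = (\<Sum>i<?n. a i *s v i)" using vspan by blast
    have "b (w' j) x = a j" if "j < ?n" for j
    proof -
      have "b (w' j) x = (\<Sum>i<?n. a i * b (w' j) (v i))" unfolding a by (simp add: b_simps)
      also have "\<dots> = (\<Sum>i<?n. if i = j then a j else 0)" using that by (intro sum.cong refl) (auto simp: w')
      also have "\<dots> = a j" using that by simp
      finally show ?thesis .
    qed
    then have "(\<Sum>i<?n. b (w' i) x *s v i) = (\<Sum>i<?n. a i *s v i)" by simp
    then show ?thesis using a by simp
  qed
  have A6: "\<exists>s. w (\<nu>+m+i) = s *s v i" if i: "i < \<nu>" for i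
  proof -
    define s0 where "s0 = b (f i) (e i)"
    have "b (e i) (f i) = 1" using f i by simp
    then have s0: "s0 \<noteq> 0" unfolding s0_def using orth by force
    define d where "d = e i - s0 *s w (\<nu>+m+i)"
    have dv: "b (v j) d = 0" if j: "j < ?n" for j
    proof (cases "j < \<nu>+m")
      case True
      have "b (e i) (v j) = 0" using vP[OF True eW[OF i]] .
      then have "b (v j) (e i) = 0" using orth by blast
      moreover have "b (v j) (w (\<nu>+m+i)) = 0" using w[of j "\<nu>+m+i"] j i True by simp
      ultimately show ?thesis unfolding d_def by (simp add: b_simps)
    next
      case False
      define k where "k = j - (\<nu>+m)"
      have k: "j = \<nu>+m+k" "k < \<nu>" using False j unfolding k_def by auto
      show ?thesis
      proof (cases "k = i")
        case True
        then show ?thesis unfolding d_def using w[of j j] j k vf by (simp add: b_simps s0_def)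
      next
        case False
        have "b (e i) (f k) = 0" using f[of i k] i k False by simp
        then have "b (f k) (e i) = 0" using orth by blast
        moreover have "b (v j) (w (\<nu>+m+i)) = 0" using w[of j "\<nu>+m+i"] j i k False by simp
        ultimately show ?thesis unfolding d_def using k vf by (simp add: b_simps)
      qed
    qed
    have "b y d = 0" for y
    proof -
      have "b y d = b (\<Sum>j<?n. b (w' j) y *s v j) d" using A4[of y] by simp
      also have "\<dots> = 0" by (simp add: b_simps dv)
      finally show ?thesis .
    qed
    then have "d = 0" using nd2 by blast
    then have "w (\<nu>+m+i) = inverse s0 *s e i" using s0 unfolding d_def by (simp add: algebra_simps)
    then show ?thesis using ve[OF i] by metis
  qed
  have A7: "b (v (\<nu>+m+k)) (v l) = 0" if "k < \<nu>" "l < \<nu>" "l \<noteq> k" for k l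
  proof -
    have "b (e l) (f k) = 0" using f that by simp
    then show ?thesis using orth vf ve that by simp
  qed
  have A1: "F i = span (v ` {..<i})" if "i \<le> \<nu>" for i
  proof -
    have "v ` {..<i} = e ` {..<i}" using that ve by (intro image_cong) auto
    then show ?thesis using eind[OF that] by simp
  qed
  have A11: "v j \<notin> F j" if "j < \<nu>" for j using e[OF that] ve[OF that] by simp
  have "setup3 scale Basis b F \<nu> m v w w'"
  proof (unfold_locales)
    show "\<And>i. i \<le> \<nu> \<Longrightarrow> F i = span (v ` {..<i})" by (rule A1)
    show "perp b (F \<nu>) = span (v ` {..<\<nu>+m})" by (rule A2)
    show "\<And>i j. i < ?n \<Longrightarrow> j < ?n \<Longrightarrow> b (w' j) (v i) = (if j = i then 1 else 0)"
      using w' by auto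
    show "\<And>x. x = (\<Sum>i<?n. b (w' i) x *s v i)" by (rule A4)
    show "\<And>i j. i < ?n \<Longrightarrow> j < ?n \<Longrightarrow> b (v i) (w j) = (if i = j then 1 else 0)" by (rule w)
    show "\<And>i. i < \<nu> \<Longrightarrow> \<exists>s. w (\<nu>+m+i) = s *s v i" by (rule A6)
    show "\<And>k l. k < \<nu> \<Longrightarrow> l < \<nu> \<Longrightarrow> l \<noteq> k \<Longrightarrow> b (v (\<nu>+m+k)) (v l) = 0" by (rule A7)
    show "totally_singular (*s) b (F \<nu>)" by (rule sing)
    show "\<And>X. totally_singular (*s) b X \<Longrightarrow> dim X \<le> \<nu>" by (rule witt)
    show "dim (F \<nu>) = \<nu>" using Fdim by simp
    show "\<And>j. j < \<nu> \<Longrightarrow> v j \<notin> F j" by (rule A11)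
  qed
  then show ?thesis using dimU by blast
qed

end


theorem mainTheorem7:
  fixes scale :: "'a::field \<Rightarrow> 'v::ab_group_add \<Rightarrow> 'v"
    and b :: "'v \<Rightarrow> 'v \<Rightarrow> 'a"
    and F :: "nat \<Rightarrow> 'v set"
  assumes "fin_dim_vs scale"
    and "bilinear_form scale b"
    and "nondegenerate b"
    and "symmetric_form b \<or> alternating_form b"
    and "is_flag scale F (witt_index scale b)"
    and "partially_complete scale F (witt_index scale b)"
    and "singular_flag scale b F (witt_index scale b)"
  shows "WS scale b F (witt_index scale b) \<subseteq> End scale
     \<and> module.subspace (end_scale scale) (WS scale b F (witt_index scale b))
     \<and> vector_space.dim (end_scale scale) (WS scale b F (witt_index scale b))
        = witt_index scale b * (vector_space.dim scale (UNIV :: 'v set) - witt_index scale b)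
   \<and> WA scale b F (witt_index scale b) \<subseteq> End scale
     \<and> module.subspace (end_scale scale) (WA scale b F (witt_index scale b))
     \<and> vector_space.dim (end_scale scale) (WA scale b F (witt_index scale b))
        = witt_index scale b * (vector_space.dim scale (UNIV :: 'v set) - witt_index scale b - 1)"
proof -
  define \<nu> where "\<nu> = witt_index scale b"
  have vs: "vector_space scale" and B0: "\<exists>B. finite B \<and> module.span scale B = UNIV"
    using assms(1) unfolding fin_dim_vs_def by auto
  interpret vs: vector_space scale by (rule vs)
  obtain B0 where B0f: "finite B0" "vs.span B0 = UNIV" using B0 by blast
  obtain Bas where Bas: "Bas \<subseteq> B0" "vs.independent Bas" "B0 \<subseteq> vs.span Bas"
    using vs.maximal_independent_subset[of B0] by blast
  have spanBas: "vs.span Bas = UNIV"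
    using B0f(2) vs.span_mono[OF Bas(3)] vs.span_span by auto
  have finBas: "finite Bas" using finite_subset[OF Bas(1) B0f(1)] .
  interpret fd: finite_dimensional_vector_space scale Bas
    by unfold_locales (use finBas Bas(2) spanBas in auto)
  have linR: "Vector_Spaces.linear scale (*) (b x)" for x using assms(2) unfolding bilinear_form_def by blast
  have linL: "Vector_Spaces.linear scale (*) (\<lambda>x. b x y)" for y using assms(2) unfolding bilinear_form_def by blast
  have rA: "b x (y + z) = b x y + b x z" for x y z using linR[of x, unfolded Vector_Spaces.linear_iff] by blast
  have lA: "b (x + y) z = b x z + b y z" for x y z using linL[of z, unfolded Vector_Spaces.linear_iff] by blast
  have orth: "b x y = 0 \<longleftrightarrow> b y x = 0" for x y
    using assms(4)
  proof
    assume "symmetric_form b" then show ?thesis unfolding symmetric_form_def by metis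
  next
    assume al: "alternating_form b"
    have "0 = b (x + y) (x + y)" using al unfolding alternating_form_def by simp
    also have "\<dots> = b x x + b x y + b y x + b y y" by (simp add: rA lA)
    finally have "b x y + b y x = 0" using al unfolding alternating_form_def by simp
    then have "b x y = - b y x" by (simp add: eq_neg_iff_add_eq_0)
    then show ?thesis by simp
  qed
  interpret bf: bform scale Bas b
    by unfold_locales (use assms(2,3) orth in auto)
  have witt: "vs.dim X \<le> \<nu>" if "totally_singular scale b X" for X
  proof -
    have fin: "finite {vs.dim X | X. totally_singular scale b X}"
    proof (rule finite_subset[of _ "{..fd.dimension}"])
      show "{vs.dim X |X. totally_singular scale b X} \<subseteq> {..fd.dimension}"
        using fd.dim_subset_UNIV by auto
    qed simp
    show ?thesis unfolding \<nu>_def witt_index_def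
      by (rule Max_ge[OF fin]) (use that in blast)
  qed
  have sing: "totally_singular scale b (F \<nu>)" using assms(7) unfolding singular_flag_def \<nu>_def .
  obtain m v w w' where s3: "setup3 scale Bas b F \<nu> m v w w'" and dimU: "vs.dim (UNIV::'v set) = \<nu>+m+\<nu>"
    using bf.build[OF assms(5)[folded \<nu>_def] assms(6)[folded \<nu>_def] sing witt] by blast
  interpret s3: setup3 scale Bas b F \<nu> m v w w' by (rule s3)
  have e1: "WS scale b F \<nu> \<subseteq> End scale" unfolding WS_def b_symmetric_end_def by auto
  have e2: "WA scale b F \<nu> \<subseteq> End scale" unfolding WA_def b_alternating_end_def by auto
  have d1: "\<nu> + m + \<nu> - \<nu> = \<nu> + m" by simp
  have d2: "\<nu> + m + \<nu> - \<nu> - 1 = \<nu> + m - 1" by simp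
  show ?thesis
    unfolding \<nu>_def[symmetric] dimU d1 d2
    using e1 e2 s3.WS_res s3.WA_res by blast
qed


end
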